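(* Let $V$ be finite, $n\ge1$, $G$ a multigraph on $V$ (self-loops allowed), and define $p_G$ by the routing formula below. Then (a) $p_G$ equals the Hermite-sum expression $$\sum_{\sigma:E(G)\to[n]}\ \prod_{u\in V,\, i\in[n]} h_{c_{u,i}(\sigma)}(d_{u,i}),$$ where $c_{u,i}(\sigma)$ is the number of half-edges at $u$ whose edge $e$ satisfies $\sigma(e)=i$ (so a self-loop at $u$ labeled $i$ contributes $2$), and $h_k$ is the monic (probabilists') Hermite polynomial of degree $k$; (b) $p_G$ is invariant under replacing $(d_u)_{u\in V}$ by $(Td_u)_{u\in V}$ for any orthogonal $n\times n$ matrix $T$; (c) $p_G$ has total degree $2|E(G)|$ in the variables $d_{u,i}$ and $p_G-m_G$ has strictly lower degree; and if $d_u\sim\mathcal N(0,\mathrm{Id}_n)$ are independent, then $\mathbb{E}[p_Gp_H]=0$ for any multigraphs $G,H$ on $V$ with $|E(G)|\ne|E(H)|$.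
   Context: A multigraph on $V$ is a finite multiset of edges $\{u,w\}$ with $u,w\in V$, self-loops allowed. For such $K$, $m_K=\prod_{\{u,w\}\in E(K)}\langle d_u,d_w\rangle$ with multiplicity (self-loop at $u$ gives $\langle d_u,d_u\rangle$), where $d_u\in\mathbb{R}^n$ and $d_{u,i}$ is its $i$-th coordinate. Each edge has two half-edges, one at each endpoint (both at $u$ for a loop at $u$). A matching collection $M=(M_v)_{v\in V}$ consists of a partial matching $M_v$ of the half-edges at $v$ for each $v$; $\mathcal M(G)$ is the set of all of them and $|M|=\sum_v|M_v|$ is the total number of matched pairs. Let $\Gamma_M$ be the multigraph on the set of half-edges with an edge joining the two half-edges of each edge of $G$ and an edge joining each $M$-matched pair; its components are paths and cycles. $\mathrm{cycles}(M)$ is the number of cycle components, and $\mathrm{route}(M)$ is the multigraph on $V$ having one edge $\{u,w\}$ for each path component of $\Gamma_M$ whose two end half-edges lie at $u$ and at $w$. The (Gaussian) polynomial is $$p_G=\sum_{M\in\mathcal M(G)}(-1)^{|M|}\,n^{\mathrm{cycles}(M)}\,m_{\mathrm{route}(M)}.$$ *)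

theory Defs
  imports "HOL-Probability.Probability" "HOL-Library.Poly_Mapping"
begin

(* Multivariate real polynomials in the variables d_{u,i} (u :: 'v, i :: 'n):
   a polynomial maps each monomial (exponent vector) to its coefficient. *)
type_synonym ('v,'n) mpoly = "(('v \<times> 'n) \<Rightarrow>\<^sub>0 nat) \<Rightarrow>\<^sub>0 real"

definition Var :: "'v \<Rightarrow> 'n \<Rightarrow> ('v,'n) mpoly" where
  "Var u i = Poly_Mapping.single (Poly_Mapping.single (u,i) 1) 1"

definition mdeg :: "('a \<Rightarrow>\<^sub>0 nat) \<Rightarrow> nat" where
  "mdeg m = (\<Sum>x\<in>Poly_Mapping.keys m. Poly_Mapping.lookup m x)"

definition tdeg :: "('v,'n) mpoly \<Rightarrow> nat" where
  "tdeg p = Max (insert 0 (mdeg ` Poly_Mapping.keys p))"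

definition eval_mp :: "('v,'n) mpoly \<Rightarrow> ('v \<Rightarrow> real^'n) \<Rightarrow> real" where
  "eval_mp p d = (\<Sum>m\<in>Poly_Mapping.keys p. Poly_Mapping.lookup p m * (\<Prod>x\<in>Poly_Mapping.keys m. (d (fst x) $ snd x) ^ Poly_Mapping.lookup m x))"

definition ip :: "'v \<Rightarrow> 'v \<Rightarrow> ('v,'n::finite) mpoly" where
  "ip u w = (\<Sum>i\<in>UNIV. Var u i * Var w i)"

(* A multigraph on V is given by a list of edges es; edge j (j < length es) is
   {fst (es!j), snd (es!j)}; (u,u) is a self-loop.  The multigraph is mset es
   (orientation and order are irrelevant). *)
type_synonym 'v mgraph = "('v \<times> 'v) list"

(* half-edges: (j,False) sits at fst (es!j), (j,True) at snd (es!j) *)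
definition halfedges :: "'v mgraph \<Rightarrow> (nat \<times> bool) set" where
  "halfedges es = {..<length es} \<times> UNIV"

definition hv :: "'v mgraph \<Rightarrow> nat \<times> bool \<Rightarrow> 'v" where
  "hv es h = (if snd h then snd (es ! fst h) else fst (es ! fst h))"

definition mono_m :: "'v mgraph \<Rightarrow> ('v,'n::finite) mpoly" where
  "mono_m es = (\<Prod>j<length es. ip (fst (es!j)) (snd (es!j)))"

(* A matching collection M = (M_v)_v is represented by the set of all matched
   pairs (union of the M_v): a set of pairwise disjoint 2-sets of half-edges,
   each consisting of two distinct half-edges at the same vertex. *)
definition matching_colls :: "'v mgraph \<Rightarrow> (nat \<times> bool) set set set" where
  "matching_colls es = {M. (\<forall>p\<in>M. \<exists>h h'. p = {h,h'} \<and> h \<noteq> h' \<and>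
        h \<in> halfedges es \<and> h' \<in> halfedges es \<and> hv es h = hv es h') \<and>
      (\<forall>p\<in>M. \<forall>q\<in>M. p \<noteq> q \<longrightarrow> p \<inter> q = {})}"

definition matched :: "(nat \<times> bool) set set \<Rightarrow> nat \<times> bool \<Rightarrow> bool" where
  "matched M h = (\<exists>p\<in>M. h \<in> p)"

definition gamma_adj :: "'v mgraph \<Rightarrow> (nat \<times> bool) set set \<Rightarrow> ((nat \<times> bool) \<times> (nat \<times> bool)) set" where
  "gamma_adj es M = {(h,h'). h \<in> halfedges es \<and> h' \<in> halfedges es \<and> h \<noteq> h' \<and>
      (fst h = fst h' \<or> {h,h'} \<in> M)}"

definition gamma_comps :: "'v mgraph \<Rightarrow> (nat \<times> bool) set set \<Rightarrow> (nat \<times> bool) set set" where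
  "gamma_comps es M = halfedges es // ((gamma_adj es M)\<^sup>*)"

(* Every vertex of Gamma_M has degree 1 (unmatched) or 2 (matched); a component is
   a cycle iff all its vertices have degree 2, otherwise it is a path whose two
   ends are exactly its unmatched half-edges. *)
definition cycle_comps :: "'v mgraph \<Rightarrow> (nat \<times> bool) set set \<Rightarrow> (nat \<times> bool) set set" where
  "cycle_comps es M = {C \<in> gamma_comps es M. \<forall>h\<in>C. matched M h}"

definition path_comps :: "'v mgraph \<Rightarrow> (nat \<times> bool) set set \<Rightarrow> (nat \<times> bool) set set" where
  "path_comps es M = {C \<in> gamma_comps es M. \<exists>h\<in>C. \<not> matched M h}"

definition path_ends :: "(nat \<times> bool) set set \<Rightarrow> (nat \<times> bool) set \<Rightarrow> (nat \<times> bool) set" where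
  "path_ends M C = {h \<in> C. \<not> matched M h}"

(* m_{route(M)}: one factor <d_u,d_w> per path component with end half-edges at u and w
   (the two ends h1 \<noteq> h2 give  sum_i d_{u,i} d_{w,i}) *)
definition m_route :: "'v mgraph \<Rightarrow> (nat \<times> bool) set set \<Rightarrow> ('v,'n::finite) mpoly" where
  "m_route es M = (\<Prod>C\<in>path_comps es M. \<Sum>i\<in>UNIV. \<Prod>h\<in>path_ends M C. Var (hv es h) i)"

definition pG :: "'v mgraph \<Rightarrow> ('v,'n::finite) mpoly" where
  "pG es = (\<Sum>M\<in>matching_colls es.
      (-1) ^ card M * of_nat (CARD('n)) ^ card (cycle_comps es M) * m_route es M)"

fun hermite :: "nat \<Rightarrow> 'a::comm_ring_1 \<Rightarrow> 'a" where
  "hermite 0 x = 1"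
| "hermite (Suc 0) x = x"
| "hermite (Suc (Suc k)) x = x * hermite (Suc k) x - of_nat (Suc k) * hermite k x"

definition cnt :: "'v mgraph \<Rightarrow> (nat \<Rightarrow> 'n) \<Rightarrow> 'v \<Rightarrow> 'n \<Rightarrow> nat" where
  "cnt es \<sigma> u i = card {h \<in> halfedges es. hv es h = u \<and> \<sigma> (fst h) = i}"

(* standard Gaussian on all coordinates d_{u,i}, i.e. d_u ~ N(0, Id_n) independent *)
definition gauss :: "(('v \<times> 'n) \<Rightarrow> real) measure" where
  "gauss = PiM UNIV (\<lambda>_. density lborel std_normal_density)"

definition to_pt :: "(('v \<times> 'n) \<Rightarrow> real) \<Rightarrow> ('v \<Rightarrow> real^'n)" where
  "to_pt x = (\<lambda>u. \<chi> i. x (u,i))"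

end

theory Submission
  imports Defs "HOL-Computational_Algebra.Polynomial"
begin


section \<open>Evaluation homomorphism\<close>

definition mon :: "(('v \<times> 'n) \<Rightarrow>\<^sub>0 nat) \<Rightarrow> ('v \<Rightarrow> real^'n) \<Rightarrow> real" where
  "mon m d = (\<Prod>x\<in>Poly_Mapping.keys m. (d (fst x) $ snd x) ^ Poly_Mapping.lookup m x)"

lemma mon_superset:
  assumes "finite S" "Poly_Mapping.keys m \<subseteq> S"
  shows "mon m d = (\<Prod>x\<in>S. (d (fst x) $ snd x) ^ Poly_Mapping.lookup m x)"
  unfolding mon_def
  by (rule prod.mono_neutral_left) (use assms in \<open>auto simp: in_keys_iff\<close>)

lemma mon_add: "mon (a + b) d = mon a d * mon b d"
proof -
  let ?S = "Poly_Mapping.keys a \<union> Poly_Mapping.keys b"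
  have f: "finite ?S" by simp
  have "mon (a+b) d = (\<Prod>x\<in>?S. (d (fst x) $ snd x) ^ Poly_Mapping.lookup (a+b) x)"
    by (rule mon_superset[OF f]) (rule keys_add)
  also have "\<dots> = (\<Prod>x\<in>?S. (d (fst x) $ snd x) ^ Poly_Mapping.lookup a x * (d (fst x) $ snd x) ^ Poly_Mapping.lookup b x)"
    by (simp add: lookup_add power_add)
  also have "\<dots> = mon a d * mon b d"
    by (simp add: prod.distrib mon_superset[OF f])
  finally show ?thesis .
qed

lemma mon_zero [simp]: "mon 0 d = 1"
  by (simp add: mon_def)

lemma eval_mp_alt: "eval_mp p d = (\<Sum>m\<in>Poly_Mapping.keys p. Poly_Mapping.lookup p m * mon m d)"
  by (simp add: eval_mp_def mon_def)

lemma eval_add: "eval_mp (p + q) d = eval_mp p d + eval_mp q d"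
  unfolding eval_mp_alt
  by (rule setsum_keys_plus_distrib) (auto simp: algebra_simps)

lemma eval_zero [simp]: "eval_mp 0 d = 0"
  by (simp add: eval_mp_alt)

lemma eval_single: "eval_mp (Poly_Mapping.single m c) d = c * mon m d"
  by (cases "c = 0") (simp_all add: eval_mp_alt)

lemma poly_expand: "p = (\<Sum>m\<in>Poly_Mapping.keys p. Poly_Mapping.single m (Poly_Mapping.lookup p m))"
proof (rule poly_mapping_eqI)
  fix k
  show "Poly_Mapping.lookup p k = Poly_Mapping.lookup (\<Sum>m\<in>Poly_Mapping.keys p. Poly_Mapping.single m (Poly_Mapping.lookup p m)) k"
    by (simp add: lookup_sum lookup_single when_def in_keys_iff)
qed

lemma eval_sum: "finite I \<Longrightarrow> eval_mp (\<Sum>i\<in>I. f i) d = (\<Sum>i\<in>I. eval_mp (f i) d)"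
  by (induction I rule: finite_induct) (simp_all add: eval_add)

lemma eval_mult: "eval_mp (p * q) d = eval_mp p d * eval_mp q d"
proof -
  have "p * q = (\<Sum>m\<in>Poly_Mapping.keys p. Poly_Mapping.single m (Poly_Mapping.lookup p m)) *
                (\<Sum>m\<in>Poly_Mapping.keys q. Poly_Mapping.single m (Poly_Mapping.lookup q m))"
    by (subst poly_expand[of p], subst poly_expand[of q]) (rule refl)
  also have "\<dots> = (\<Sum>m\<in>Poly_Mapping.keys p. \<Sum>m'\<in>Poly_Mapping.keys q.
        Poly_Mapping.single (m+m') (Poly_Mapping.lookup p m * Poly_Mapping.lookup q m'))"
    by (simp add: sum_distrib_left sum_distrib_right mult_single) (rule sum.swap)
  finally have "eval_mp (p*q) d = (\<Sum>m\<in>Poly_Mapping.keys p. \<Sum>m'\<in>Poly_Mapping.keys q.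
        (Poly_Mapping.lookup p m * mon m d) * (Poly_Mapping.lookup q m' * mon m' d))"
    by (simp add: eval_sum eval_single mon_add algebra_simps)
  also have "\<dots> = eval_mp p d * eval_mp q d"
    by (simp add: eval_mp_alt sum_product)
  finally show ?thesis .
qed

lemma eval_one [simp]: "eval_mp 1 d = 1"
proof -
  have "eval_mp (Poly_Mapping.single 0 (1::real)) d = (1::real)" by (simp only: eval_single) simp
  then show ?thesis by simp
qed

lemma eval_uminus: "eval_mp (- p) d = - eval_mp p d"
proof -
  have "eval_mp p d + eval_mp (- p) d = 0" using eval_add[of p "-p" d] by simp
  then show ?thesis by linarith
qed

lemma eval_diff: "eval_mp (p - q) d = eval_mp p d - eval_mp q d"
  by (simp only: diff_conv_add_uminus eval_add eval_uminus)

lemma eval_of_nat [simp]: "eval_mp (of_nat k) d = of_nat k"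
  by (induction k) (simp_all add: eval_add)

lemma eval_prod: "finite I \<Longrightarrow> eval_mp (\<Prod>i\<in>I. f i) d = (\<Prod>i\<in>I. eval_mp (f i) d)"
  by (induction I rule: finite_induct) (simp_all add: eval_mult)

lemma eval_power: "eval_mp (p ^ k) d = eval_mp p d ^ k"
  by (induction k) (simp_all add: eval_mult)

lemma eval_neg1_power: "eval_mp ((-1) ^ k) d = (-1) ^ k"
  by (simp add: eval_power eval_uminus)

lemma eval_hermite: "eval_mp (hermite k p) d = hermite k (eval_mp p d)"
  by (induction k p rule: hermite.induct) (simp_all add: eval_diff eval_mult eval_add)

lemma eval_Var [simp]: "eval_mp (Var u i) d = d u $ i"
  by (simp add: Var_def eval_single mon_def)

section \<open>Degrees\<close>

lemma mdeg_superset: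
  assumes "finite S" "Poly_Mapping.keys m \<subseteq> S"
  shows "mdeg m = (\<Sum>x\<in>S. Poly_Mapping.lookup m x)"
  unfolding mdeg_def
  by (rule sum.mono_neutral_left) (use assms in \<open>auto simp: in_keys_iff\<close>)

lemma mdeg_add: "mdeg (a + b) = mdeg a + mdeg b"
proof -
  let ?S = "Poly_Mapping.keys a \<union> Poly_Mapping.keys b"
  have f: "finite ?S" by simp
  have "mdeg (a+b) = (\<Sum>x\<in>?S. Poly_Mapping.lookup (a+b) x)"
    by (rule mdeg_superset[OF f]) (rule keys_add)
  also have "\<dots> = mdeg a + mdeg b"
    by (simp add: lookup_add sum.distrib mdeg_superset[OF f])
  finally show ?thesis .
qed

lemma mdeg_zero [simp]: "mdeg 0 = 0"
  by (simp add: mdeg_def)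

definition degle :: "('v,'n) mpoly \<Rightarrow> nat \<Rightarrow> bool" where
  "degle p k = (\<forall>m\<in>Poly_Mapping.keys p. mdeg m \<le> k)"

definition homog :: "('v,'n) mpoly \<Rightarrow> nat \<Rightarrow> bool" where
  "homog p k = (\<forall>m\<in>Poly_Mapping.keys p. mdeg m = k)"

lemma degle_mono: "degle p k \<Longrightarrow> k \<le> k' \<Longrightarrow> degle p k'"
  by (auto simp: degle_def)

lemma degle_add: "degle p k \<Longrightarrow> degle q k \<Longrightarrow> degle (p + q) k"
  using keys_add[of p q] by (auto simp: degle_def)

lemma degle_uminus: "degle p k \<Longrightarrow> degle (- p) k"
  by (simp add: degle_def)

lemma degle_zero [simp]: "degle 0 k"
  by (simp add: degle_def)

lemma degle_mult: "degle p k \<Longrightarrow> degle q l \<Longrightarrow> degle (p * q) (k + l)"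
  using keys_mult[of p q] by (force simp: degle_def mdeg_add intro: add_mono)

lemma degle_sum: "(\<And>i. i \<in> I \<Longrightarrow> degle (f i) k) \<Longrightarrow> degle (\<Sum>i\<in>I. f i) k"
  using keys_sum[of f I] by (force simp: degle_def)

lemma degle_prod: "finite I \<Longrightarrow> (\<And>i. i \<in> I \<Longrightarrow> degle (f i) (k i)) \<Longrightarrow> degle (\<Prod>i\<in>I. f i) (\<Sum>i\<in>I. k i)"
proof (induction I rule: finite_induct)
  case empty
  then show ?case by (simp add: degle_def)
next
  case (insert x F)
  then show ?case by (simp add: degle_mult)
qed

lemma degle_one [simp]: "degle 1 k"
  by (simp add: degle_def)

lemma degle_of_nat [simp]: "degle (of_nat n) k"
proof -
  have "Poly_Mapping.keys (of_nat n :: ('v,'n) mpoly) \<subseteq> {0}"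
    by (metis keys_single single_of_nat empty_subsetI order_refl)
  then show ?thesis by (auto simp: degle_def)
qed

lemma degle_Var: "degle (Var u i) 1"
  by (simp add: degle_def Var_def mdeg_def)

lemma degle_neg1_pow: "degle ((-1::('v,'n) mpoly) ^ a) 0"
proof (induction a)
  case 0
  then show ?case by simp
next
  case (Suc a)
  have "degle ((-1) * (-1::('v,'n) mpoly) ^ a) (0+0)"
    by (rule degle_mult[OF degle_uminus[OF degle_one] Suc.IH])
  then show ?case by simp
qed

lemma degle_of_nat_pow: "degle ((of_nat n::('v,'n) mpoly) ^ b) 0"
proof (induction b)
  case 0
  then show ?case by simp
next
  case (Suc b)
  have "degle (of_nat n * (of_nat n::('v,'n) mpoly) ^ b) (0+0)"
    by (rule degle_mult[OF degle_of_nat Suc.IH])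
  then show ?case by simp
qed

lemma degle_power_const: "degle ((-1::('v,'n) mpoly) ^ a * of_nat n ^ b) 0"
  using degle_mult[OF degle_neg1_pow degle_of_nat_pow] by simp

lemma homog_mult: "homog p k \<Longrightarrow> homog q l \<Longrightarrow> homog (p * q) (k + l)"
  using keys_mult[of p q] by (force simp: homog_def mdeg_add)

lemma homog_sum: "(\<And>i. i \<in> I \<Longrightarrow> homog (f i) k) \<Longrightarrow> homog (\<Sum>i\<in>I. f i) k"
  using keys_sum[of f I] by (force simp: homog_def)

lemma homog_prod: "finite I \<Longrightarrow> (\<And>i. i \<in> I \<Longrightarrow> homog (f i) (k i)) \<Longrightarrow> homog (\<Prod>i\<in>I. f i) (\<Sum>i\<in>I. k i)"
proof (induction I rule: finite_induct)
  case empty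
  then show ?case by (simp add: homog_def)
next
  case (insert x F)
  then show ?case by (simp add: homog_mult)
qed

lemma homog_Var: "homog (Var u i) 1"
  by (simp add: homog_def Var_def mdeg_def)



definition pmatch :: "'b set \<Rightarrow> 'b set set set" where
  "pmatch S = {N. (\<forall>p\<in>N. \<exists>a b. p = {a,b} \<and> a \<noteq> b \<and> a \<in> S \<and> b \<in> S) \<and>
      (\<forall>p\<in>N. \<forall>q\<in>N. p \<noteq> q \<longrightarrow> p \<inter> q = {})}"

definition HS :: "'b set \<Rightarrow> 'a::comm_ring_1 \<Rightarrow> 'a" where
  "HS S x = (\<Sum>N\<in>pmatch S. (-1) ^ card N * x ^ card (S - \<Union>N))"

lemma pmatch_sub: "pmatch S \<subseteq> Pow (Pow S)"
proof
  fix N assume "N \<in> pmatch S"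
  then have "\<forall>p\<in>N. \<exists>a b. p={a,b} \<and> a\<noteq>b \<and> a\<in>S \<and> b\<in>S" by (simp add: pmatch_def)
  then show "N \<in> Pow (Pow S)" by auto
qed

lemma finite_pmatch: "finite S \<Longrightarrow> finite (pmatch S)"
  by (rule finite_subset[OF pmatch_sub]) simp

lemma finite_pmatch_elem: "finite S \<Longrightarrow> N \<in> pmatch S \<Longrightarrow> finite N"
proof -
  assume "finite S" "N \<in> pmatch S"
  then have "N \<subseteq> Pow S" using pmatch_sub by blast
  then show "finite N" using \<open>finite S\<close> by (metis finite_Pow_iff finite_subset)
qed

lemma pmatchD: "N \<in> pmatch S \<Longrightarrow> p \<in> N \<Longrightarrow> \<exists>a b. p = {a,b} \<and> a \<noteq> b \<and> a \<in> S \<and> b \<in> S"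
  unfolding pmatch_def by blast

lemma pmatch_disj: "N \<in> pmatch S \<Longrightarrow> p \<in> N \<Longrightarrow> q \<in> N \<Longrightarrow> p \<noteq> q \<Longrightarrow> p \<inter> q = {}"
  unfolding pmatch_def by blast

lemma pmatchI:
  assumes A: "\<And>p. p \<in> N \<Longrightarrow> \<exists>a b. p = {a,b} \<and> a \<noteq> b \<and> a \<in> S \<and> b \<in> S"
    and B: "\<And>p q. p \<in> N \<Longrightarrow> q \<in> N \<Longrightarrow> p \<noteq> q \<Longrightarrow> p \<inter> q = {}"
  shows "N \<in> pmatch S"
  unfolding pmatch_def mem_Collect_eq
  by (intro conjI ballI impI) (fact A, fact B)

lemma pmatch_empty: "pmatch {} = {{}}"
  unfolding pmatch_def by auto

lemma pmatch_split1:
  assumes "a \<in> S"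
  shows "{N\<in>pmatch S. a \<notin> \<Union>N} = pmatch (S - {a})"
proof (intro equalityI subsetI)
  fix N assume N: "N \<in> {N\<in>pmatch S. a \<notin> \<Union>N}"
  show "N \<in> pmatch (S - {a})"
  proof (rule pmatchI)
    fix p assume p: "p \<in> N"
    then obtain c d where "p = {c,d}" "c \<noteq> d" "c \<in> S" "d \<in> S" using N pmatchD by blast
    moreover have "a \<notin> p" using N p by blast
    ultimately show "\<exists>c d. p = {c, d} \<and> c \<noteq> d \<and> c \<in> S - {a} \<and> d \<in> S - {a}" by blast
  next
    fix p q assume "p \<in> N" "q \<in> N" "p \<noteq> q"
    then show "p \<inter> q = {}" using N pmatch_disj by blast
  qed
next
  fix N assume N: "N \<in> pmatch (S - {a})"
  have "N \<in> pmatch S"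
  proof (rule pmatchI)
    fix p assume p: "p \<in> N"
    then show "\<exists>c d. p = {c, d} \<and> c \<noteq> d \<and> c \<in> S \<and> d \<in> S" using N pmatchD by blast
  next
    fix p q assume "p \<in> N" "q \<in> N" "p \<noteq> q"
    then show "p \<inter> q = {}" using N pmatch_disj by blast
  qed
  moreover have "a \<notin> \<Union>N" using N pmatch_sub by blast
  ultimately show "N \<in> {N\<in>pmatch S. a \<notin> \<Union>N}" by blast
qed

lemma pmatch_split2:
  assumes "a \<in> S"
  shows "{N\<in>pmatch S. a \<in> \<Union>N} = (\<Union>b\<in>S - {a}. insert {a,b} ` pmatch (S - {a} - {b}))"
proof (intro equalityI subsetI)
  fix N assume "N \<in> {N\<in>pmatch S. a \<in> \<Union>N}"
  then have N: "N \<in> pmatch S" "a \<in> \<Union>N" by auto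
  then obtain p where p: "p \<in> N" "a \<in> p" by auto
  obtain c d where cd: "p = {c,d}" "c \<noteq> d" "c \<in> S" "d \<in> S" using pmatchD[OF N(1) p(1)] by blast
  then obtain b where b: "p = {a,b}" "b \<noteq> a" "b \<in> S" using p by auto
  have "N - {p} \<in> pmatch (S - {a} - {b})"
  proof (rule pmatchI)
    fix q assume q: "q \<in> N - {p}"
    then have "q \<inter> p = {}" using pmatch_disj[OF N(1), of q p] p(1) by blast
    moreover obtain c d where cd: "q = {c,d}" "c \<noteq> d" "c \<in> S" "d \<in> S"
      using q pmatchD[OF N(1), of q] by auto
    ultimately have "c \<notin> {a,b}" "d \<notin> {a,b}" using b(1) p by auto
    then show "\<exists>c d. q = {c, d} \<and> c \<noteq> d \<and> c \<in> S - {a} - {b} \<and> d \<in> S - {a} - {b}"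
      using cd by (intro exI[of _ c] exI[of _ d]) auto
  next
    fix q q' assume "q \<in> N - {p}" "q' \<in> N - {p}" "q \<noteq> q'"
    then show "q \<inter> q' = {}" using N(1) pmatch_disj by blast
  qed
  moreover have "N = insert {a,b} (N - {p})" using p(1) b(1) by auto
  ultimately show "N \<in> (\<Union>b\<in>S - {a}. insert {a,b} ` pmatch (S - {a} - {b}))"
    using b by blast
next
  fix N assume "N \<in> (\<Union>b\<in>S - {a}. insert {a,b} ` pmatch (S - {a} - {b}))"
  then obtain b N' where b: "b \<in> S" "b \<noteq> a" "N' \<in> pmatch (S - {a} - {b})" "N = insert {a,b} N'" by auto
  have sub: "\<Union>N' \<subseteq> S - {a} - {b}" using b(3) pmatch_sub by blast
  have "N \<in> pmatch S"
  proof (rule pmatchI)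
    fix p assume p: "p \<in> N"
    show "\<exists>c d. p = {c, d} \<and> c \<noteq> d \<and> c \<in> S \<and> d \<in> S"
    proof (cases "p = {a,b}")
      case True
      then show ?thesis using b assms by blast
    next
      case False
      then have "p \<in> N'" using p unfolding b(4) by simp
      then obtain c d where "p = {c,d}" "c \<noteq> d" "c \<in> S - {a} - {b}" "d \<in> S - {a} - {b}"
        using pmatchD[OF b(3), of p] by auto
      then show ?thesis by (intro exI[of _ c] exI[of _ d]) auto
    qed
  next
    fix p q assume pq: "p \<in> N" "q \<in> N" "p \<noteq> q"
    show "p \<inter> q = {}"
    proof (cases "p = {a,b} \<or> q = {a,b}")
      case True
      then show ?thesis using pq b(4) sub by blast
    next
      case False
      then show ?thesis using pq b(4) pmatch_disj[OF b(3)] by blast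
    qed
  qed
  then show "N \<in> {N\<in>pmatch S. a \<in> \<Union>N}" using b by auto
qed

lemma HS_rec:
  assumes "finite S" "a \<in> S"
  shows "HS S x = x * HS (S - {a}) x - (\<Sum>b\<in>S - {a}. HS (S - {a} - {b}) x)"
proof -
  let ?f = "\<lambda>S N. (-1) ^ card N * x ^ card (S - \<Union>N)"
  have fin: "finite (pmatch S)" using assms by (simp add: finite_pmatch)
  have split: "pmatch S = {N\<in>pmatch S. a \<notin> \<Union>N} \<union> {N\<in>pmatch S. a \<in> \<Union>N}" by auto
  have "HS S x = (\<Sum>N\<in>{N\<in>pmatch S. a \<notin> \<Union>N}. ?f S N) + (\<Sum>N\<in>{N\<in>pmatch S. a \<in> \<Union>N}. ?f S N)"
    unfolding HS_def by (subst split, rule sum.union_disjoint) (use fin in auto)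
  also have "(\<Sum>N\<in>{N\<in>pmatch S. a \<notin> \<Union>N}. ?f S N) = (\<Sum>N\<in>pmatch (S-{a}). x * ?f (S - {a}) N)"
  proof (subst pmatch_split1[OF assms(2)], rule sum.cong[OF refl])
    fix N assume N: "N \<in> pmatch (S - {a})"
    then have "a \<notin> \<Union>N" using pmatch_sub by blast
    then have "S - \<Union>N = insert a (S - {a} - \<Union>N)" using assms by auto
    then have "card (S - \<Union>N) = Suc (card (S - {a} - \<Union>N))" using assms by simp
    then show "?f S N = x * ?f (S - {a}) N" by (simp add: algebra_simps)
  qed
  also have "\<dots> = x * HS (S - {a}) x" by (simp add: HS_def sum_distrib_left)
  also have "(\<Sum>N\<in>{N\<in>pmatch S. a \<in> \<Union>N}. ?f S N) =
      (\<Sum>b\<in>S - {a}. \<Sum>N\<in>insert {a,b} ` pmatch (S - {a} - {b}). ?f S N)"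
  proof (subst pmatch_split2[OF assms(2)], rule sum.UNION_disjoint)
    show "finite (S - {a})" using assms by simp
    show "\<forall>b\<in>S - {a}. finite (insert {a, b} ` pmatch (S - {a} - {b}))"
      using assms by (simp add: finite_pmatch)
    show "\<forall>b\<in>S - {a}. \<forall>c\<in>S - {a}. b \<noteq> c \<longrightarrow>
        insert {a, b} ` pmatch (S - {a} - {b}) \<inter> insert {a, c} ` pmatch (S - {a} - {c}) = {}"
    proof (intro ballI impI)
      fix b c assume bc: "b \<in> S - {a}" "c \<in> S - {a}" "b \<noteq> c"
      show "insert {a, b} ` pmatch (S - {a} - {b}) \<inter> insert {a, c} ` pmatch (S - {a} - {c}) = {}"
      proof (rule ccontr)
        assume "\<not> ?thesis"
        then obtain N N' where NN: "N \<in> pmatch (S - {a} - {b})" "N' \<in> pmatch (S - {a} - {c})"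
          "insert {a,b} N = insert {a,c} N'" by blast
        then have "{a,b} \<in> insert {a,c} N'" by blast
        moreover have "{a,b} \<notin> N'" using NN(2) pmatch_sub by blast
        ultimately have "{a,b} = {a,c}" by blast
        then show False using bc by (metis doubleton_eq_iff)
      qed
    qed
  qed
  also have "\<dots> = (\<Sum>b\<in>S - {a}. - HS (S - {a} - {b}) x)"
  proof (rule sum.cong[OF refl])
    fix b assume b: "b \<in> S - {a}"
    have inj: "inj_on (insert {a,b}) (pmatch (S - {a} - {b}))"
    proof (rule inj_onI)
      fix N N' assume NN: "N \<in> pmatch (S - {a} - {b})" "N' \<in> pmatch (S - {a} - {b})" "insert {a, b} N = insert {a, b} N'"
      have "{a,b} \<notin> N" "{a,b} \<notin> N'" using NN(1,2) pmatch_sub by blast+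
      then show "N = N'" using NN(3) by (metis insert_ident)
    qed
    have "(\<Sum>N\<in>insert {a,b} ` pmatch (S - {a} - {b}). ?f S N) =
          (\<Sum>N\<in>pmatch (S - {a} - {b}). ?f S (insert {a,b} N))"
      by (rule sum.reindex[OF inj, unfolded comp_def])
    also have "\<dots> = (\<Sum>N\<in>pmatch (S - {a} - {b}). - ?f (S - {a} - {b}) N)"
    proof (rule sum.cong[OF refl])
      fix N assume N: "N \<in> pmatch (S - {a} - {b})"
      have "{a,b} \<notin> N" using N pmatch_sub by blast
      moreover have "finite N" using N assms by (meson finite_Diff finite_pmatch_elem)
      ultimately have c: "card (insert {a,b} N) = Suc (card N)" by simp
      have "S - \<Union>(insert {a,b} N) = S - {a} - {b} - \<Union>N" by auto
      then show "?f S (insert {a,b} N) = - ?f (S - {a} - {b}) N" using c by simp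
    qed
    also have "\<dots> = - HS (S - {a} - {b}) x" by (simp add: HS_def sum_negf)
    finally show "(\<Sum>N\<in>insert {a,b} ` pmatch (S - {a} - {b}). ?f S N) = - HS (S - {a} - {b}) x" .
  qed
  finally show ?thesis by (simp add: sum_negf)
qed

lemma HS_hermite: "finite S \<Longrightarrow> HS S x = hermite (card S) x"
proof (induction "card S" arbitrary: S rule: less_induct)
  case less
  show ?case
  proof (cases "S = {}")
    case True
    then show ?thesis by (simp add: HS_def pmatch_empty)
  next
    case False
    then obtain a where a: "a \<in> S" by auto
    have r: "HS S x = x * HS (S - {a}) x - (\<Sum>b\<in>S - {a}. HS (S - {a} - {b}) x)"
      by (rule HS_rec[OF less.prems a])
    have c1: "card (S - {a}) < card S" using a less.prems by (meson card_Diff1_less)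
    have h1: "HS (S - {a}) x = hermite (card (S - {a})) x"
      using less.hyps[OF c1] less.prems by simp
    show ?thesis
    proof (cases "S - {a} = {}")
      case True
      then have "S = {a}" using a by auto
      then show ?thesis using r True by (simp add: HS_def pmatch_empty)
    next
      case False
      then obtain k where k: "card (S - {a}) = Suc k"
        using less.prems by (metis card_0_eq finite_Diff not0_implies_Suc)
      have cS: "card S = Suc (Suc k)" using k a less.prems by (metis card_Suc_Diff1)
      have h2: "HS (S - {a} - {b}) x = hermite k x" if b: "b \<in> S - {a}" for b
      proof -
        have "card (S - {a} - {b}) = k" using k b by simp
        moreover have "card (S - {a} - {b}) < card S" using k b cS by simp
        ultimately show ?thesis using less.hyps less.prems by simp
      qed
      have "HS S x = x * hermite (Suc k) x - of_nat (Suc k) * hermite k x"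
        using r h1 h2 k by simp
      then show ?thesis using cS by simp
    qed
  qed
qed



abbreviation NN :: "real measure" where "NN \<equiv> density lborel std_normal_density"

definition mom :: "nat \<Rightarrow> real" where "mom k = (\<integral>x. x ^ k \<partial>NN)"

lemma int_pow: "integrable NN (\<lambda>x. x ^ k)"
  by (rule integrable_std_normal_distribution_moment)

lemma mom_odd: "odd k \<Longrightarrow> mom k = 0"
  unfolding mom_def by (rule integral_std_normal_distribution_moment_odd)

lemma mom_even: "mom (2 * k) = fact (2 * k) / (2^k * fact k)"
  unfolding mom_def by (rule std_normal_distribution_even_moments(1))

lemma mom_rec: "mom (Suc (Suc k)) = of_nat (Suc k) * mom k"
proof (cases "even k")
  case True
  then obtain j where j: "k = 2 * j" by (auto elim: evenE)
  have e: "Suc (Suc k) = 2 * Suc j" using j by simp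
  have f1: "fact (2 * Suc j) = (of_nat (2*j+2) * of_nat (2*j+1) * fact (2 * j) :: real)"
    by (simp add: algebra_simps)
  have f2: "fact (Suc j) = (of_nat (j+1) * fact j :: real)" by simp
  have f3: "(2::real) ^ Suc j = 2 * 2 ^ j" by simp
  have nz: "(2 * of_nat (j+1) :: real) \<noteq> 0" by simp
  have "mom (Suc (Suc k)) = fact (2 * Suc j) / (2 ^ Suc j * fact (Suc j))"
    by (simp only: e mom_even)
  also have "\<dots> = ((2 * of_nat (j+1)) * (of_nat (2*j+1) * fact (2 * j))) / ((2 * of_nat (j+1)) * (2^j * fact j))"
    unfolding f1 f2 f3 by (simp add: algebra_simps)
  also have "\<dots> = of_nat (2*j+1) * (fact (2 * j) / (2^j * fact j))"
    by (simp only: mult_divide_mult_cancel_left[OF nz]) simp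
  also have "\<dots> = of_nat (Suc k) * mom k" using j by (simp add: mom_even)
  finally show ?thesis .
next
  case False
  then show ?thesis by (simp add: mom_odd)
qed

lemma int_poly: "integrable NN (\<lambda>x. poly p x)"
proof -
  have "integrable NN (\<lambda>x. \<Sum>i\<le>degree p. coeff p i * x ^ i)"
    by (rule Bochner_Integration.integrable_sum) (rule integrable_mult_right, rule int_pow)
  then show ?thesis by (simp only: poly_altdef)
qed

lemma L_add: "(\<integral>x. poly (p + q) x \<partial>NN) = (\<integral>x. poly p x \<partial>NN) + (\<integral>x. poly q x \<partial>NN)"
  by (simp add: int_poly)

lemma L_diff: "(\<integral>x. poly (p - q) x \<partial>NN) = (\<integral>x. poly p x \<partial>NN) - (\<integral>x. poly q x \<partial>NN)"
  by (simp add: int_poly)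

lemma L_zero: "(\<integral>x. poly 0 x \<partial>NN) = 0"
  by simp

lemma L_sum: "finite I \<Longrightarrow> (\<integral>x. poly (\<Sum>i\<in>I. f i) x \<partial>NN) = (\<Sum>i\<in>I. \<integral>x. poly (f i) x \<partial>NN)"
  by (induction I rule: finite_induct) (simp_all add: L_add del: poly_add)

lemma L_monom: "(\<integral>x. poly (monom c k) x \<partial>NN) = c * mom k"
  by (simp add: poly_monom mom_def)

lemma L_x_monom: "(\<integral>x. poly (pCons 0 (monom c i)) x \<partial>NN) = (\<integral>x. poly (pderiv (monom c i)) x \<partial>NN)"
proof -
  have "(\<integral>x. poly (pCons 0 (monom c i)) x \<partial>NN) = c * mom (Suc i)"
    by (simp only: monom_Suc[symmetric] L_monom)
  also have "\<dots> = (\<integral>x. poly (pderiv (monom c i)) x \<partial>NN)"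
  proof (cases i)
    case 0
    then show ?thesis by (simp add: pderiv_monom L_monom mom_odd)
  next
    case (Suc j)
    then show ?thesis by (simp add: pderiv_monom L_monom mom_rec del: of_nat_Suc)
  qed
  finally show ?thesis .
qed

lemma L_x: "(\<integral>x. poly (pCons 0 q) x \<partial>NN) = (\<integral>x. poly (pderiv q) x \<partial>NN)"
proof -
  define D where "D q = (\<integral>x. poly (pCons 0 q) x \<partial>NN) - (\<integral>x. poly (pderiv q) x \<partial>NN)" for q :: "real poly"
  have Dadd: "D (p + r) = D p + D r" for p r
  proof -
    have "pCons 0 (p + r) = pCons 0 p + pCons 0 r" by simp
    then show ?thesis unfolding D_def by (simp only: pderiv_add L_add)
  qed
  have Dsum: "finite I \<Longrightarrow> D (\<Sum>i\<in>I. f i) = (\<Sum>i\<in>I. D (f i))" for I and f :: "nat \<Rightarrow> real poly"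
  proof (induction I rule: finite_induct)
    case empty
    then show ?case by (simp add: D_def)
  next
    case (insert x F)
    then show ?case by (simp add: Dadd)
  qed
  have "D q = D (\<Sum>i\<le>degree q. monom (coeff q i) i)" by (simp only: poly_as_sum_of_monoms)
  also have "\<dots> = (\<Sum>i\<le>degree q. D (monom (coeff q i) i))" by (simp add: Dsum)
  also have "\<dots> = 0" by (simp add: D_def L_x_monom del: poly_pCons)
  finally show ?thesis unfolding D_def by (simp del: poly_pCons)
qed

fun hp :: "nat \<Rightarrow> real poly" where
  "hp 0 = 1"
| "hp (Suc 0) = [:0, 1:]"
| "hp (Suc (Suc k)) = pCons 0 (hp (Suc k)) - smult (of_nat (Suc k)) (hp k)"

lemma poly_hp: "poly (hp k) x = hermite k x"
  by (induction k rule: hp.induct) (simp_all add: algebra_simps)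

lemma degree_hp: "degree (hp k) \<le> k"
proof (induction k rule: hp.induct)
  case 1 then show ?case by simp
next
  case 2 then show ?case by simp
next
  case (3 k)
  have "degree (pCons 0 (hp (Suc k))) \<le> Suc (Suc k)"
    using 3 by (metis Suc_le_mono degree_pCons_le le_trans)
  moreover have "degree (smult (of_nat (Suc k)) (hp k)) \<le> Suc (Suc k)"
    using 3 by (meson degree_smult_le le_SucI le_trans)
  ultimately show ?case
    by (metis degree_diff_le hp.simps(3))
qed

lemma hp_deriv: "pderiv (hp (Suc k)) = smult (of_nat (Suc k)) (hp k) \<and> hp (Suc k) = pCons 0 (hp k) - pderiv (hp k)"
proof (induction k)
  case 0
  then show ?case by (simp add: pderiv_pCons one_pCons)
next
  case (Suc k)
  have D1: "pderiv (hp (Suc k)) = smult (of_nat (Suc k)) (hp k)" using Suc.IH by blast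
  have D2: "hp (Suc k) = pCons 0 (hp k) - pderiv (hp k)" using Suc.IH by blast
  have 2: "hp (Suc (Suc k)) = pCons 0 (hp (Suc k)) - pderiv (hp (Suc k))"
    unfolding hp.simps(3) D1 ..
  have "pderiv (hp (Suc (Suc k))) = hp (Suc k) + pCons 0 (pderiv (hp (Suc k))) - smult (of_nat (Suc k)) (pderiv (hp k))"
    by (simp only: hp.simps(3) pderiv_diff pderiv_smult pderiv_pCons)
  also have "\<dots> = hp (Suc k) + smult (of_nat (Suc k)) (pCons 0 (hp k) - pderiv (hp k))"
    by (simp add: D1 smult_diff_right del: of_nat_Suc)
  also have "\<dots> = hp (Suc k) + smult (of_nat (Suc k)) (hp (Suc k))"
    by (simp only: D2[symmetric])
  also have "\<dots> = smult (of_nat (Suc (Suc k))) (hp (Suc k))"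
  proof -
    have "smult (of_nat (Suc (Suc k))) (hp (Suc k)) = smult 1 (hp (Suc k)) + smult (of_nat (Suc k)) (hp (Suc k))"
      by (simp only: of_nat_Suc[of "Suc k"] smult_add_left)
    then show ?thesis by simp
  qed
  finally show ?case using 2 by blast
qed

lemma L_hp_step: "(\<integral>x. poly (hp (Suc a) * q) x \<partial>NN) = (\<integral>x. poly (hp a * pderiv q) x \<partial>NN)"
proof -
  have H: "hp (Suc a) = pCons 0 (hp a) - pderiv (hp a)" using hp_deriv[of a] by blast
  have "hp (Suc a) * q = pCons 0 (hp a) * q - pderiv (hp a) * q" by (simp only: H left_diff_distrib)
  also have "pCons 0 (hp a) * q = pCons 0 (hp a * q)" by simp
  finally have "hp (Suc a) * q = pCons 0 (hp a * q) - pderiv (hp a) * q" .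
  then have "(\<integral>x. poly (hp (Suc a) * q) x \<partial>NN) =
      (\<integral>x. poly (pderiv (hp a * q)) x \<partial>NN) - (\<integral>x. poly (pderiv (hp a) * q) x \<partial>NN)"
    by (simp only: L_diff L_x)
  also have "\<dots> = (\<integral>x. poly (hp a * pderiv q) x \<partial>NN)"
    by (simp only: pderiv_mult L_add) (simp add: mult.commute)
  finally show ?thesis .
qed

lemma L_hp_orth: "degree q < a \<or> q = 0 \<Longrightarrow> (\<integral>x. poly (hp a * q) x \<partial>NN) = 0"
proof (induction a arbitrary: q)
  case 0
  then show ?case by simp
next
  case (Suc a)
  have "degree (pderiv q) < a \<or> pderiv q = 0"
  proof (cases "q = 0")
    case True then show ?thesis by simp
  next
    case False
    then have dq: "degree q < Suc a" using Suc.prems by simp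
    show ?thesis
    proof (cases "degree q = 0")
      case True then show ?thesis by (simp add: pderiv_eq_0_iff)
    next
      case False then show ?thesis using dq by (intro disjI1) (simp add: degree_pderiv)
    qed
  qed
  then have "(\<integral>x. poly (hp a * pderiv q) x \<partial>NN) = 0" by (rule Suc.IH)
  then show ?case by (simp only: L_hp_step)
qed

lemma hermite_orth:
  assumes "a \<noteq> b"
  shows "(\<integral>x. hermite a x * hermite b x \<partial>NN) = (0::real)"
proof -
  have *: "(\<integral>x. hermite a x * hermite b x \<partial>NN) = 0" if "b < a" for a b
  proof -
    have "(\<integral>x. hermite a x * hermite b x \<partial>NN) = (\<integral>x. poly (hp a * hp b) x \<partial>NN)"
      by (simp add: poly_hp)
    also have "\<dots> = 0"
      using degree_hp[of b] that by (intro L_hp_orth) simp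
    finally show ?thesis .
  qed
  show ?thesis
  proof (cases "b < a")
    case True then show ?thesis by (rule *)
  next
    case False
    then have "a < b" using assms by simp
    then show ?thesis using *[of a b] by (simp add: mult.commute)
  qed
qed

lemma int_hermite2: "integrable NN (\<lambda>x. hermite a x * hermite b x :: real)"
proof -
  have eq: "(\<lambda>x. hermite a x * hermite b x :: real) = (\<lambda>x. poly (hp a * hp b) x)"
    by (simp add: poly_hp)
  show ?thesis unfolding eq by (rule int_poly)
qed

lemma gauss_orth:
  fixes f g :: "'j::finite \<Rightarrow> nat"
  assumes "(\<Sum>j\<in>UNIV. f j) \<noteq> (\<Sum>j\<in>UNIV. g j)"
  shows "integrable (PiM UNIV (\<lambda>_. NN)) (\<lambda>x. (\<Prod>j\<in>UNIV. hermite (f j) (x j)) * (\<Prod>j\<in>UNIV. hermite (g j) (x j)))"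
    and "(\<integral>x. (\<Prod>j\<in>UNIV. hermite (f j) (x j)) * (\<Prod>j\<in>UNIV. hermite (g j) (x j)) \<partial>PiM UNIV (\<lambda>_. NN)) = (0::real)"
proof -
  interpret product_prob_space "\<lambda>_::'j. NN"
    by (simp add: product_prob_space_def product_prob_space_axioms_def product_sigma_finite_def
        prob_space_normal_density prob_space_imp_sigma_finite)
  have eq: "(\<lambda>x. (\<Prod>j\<in>UNIV. hermite (f j) (x j)) * (\<Prod>j\<in>UNIV. hermite (g j) (x j))) =
      (\<lambda>x. \<Prod>j\<in>UNIV. (\<lambda>j y. hermite (f j) y * hermite (g j) y :: real) j (x j))"
    by (simp add: prod.distrib)
  show "integrable (PiM UNIV (\<lambda>_. NN)) (\<lambda>x. (\<Prod>j\<in>UNIV. hermite (f j) (x j)) * (\<Prod>j\<in>UNIV. hermite (g j) (x j)))"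
    unfolding eq by (rule product_integrable_prod) (simp_all add: int_hermite2)
  obtain j where j: "f j \<noteq> g j" using assms by (metis sum.cong)
  have "(\<integral>x. (\<Prod>j\<in>UNIV. hermite (f j) (x j)) * (\<Prod>j\<in>UNIV. hermite (g j) (x j)) \<partial>PiM UNIV (\<lambda>_. NN)) =
     (\<Prod>j\<in>UNIV. \<integral>y. hermite (f j) y * hermite (g j) y \<partial>NN)"
    unfolding eq by (rule product_integral_prod) (simp_all add: int_hermite2)
  also have "\<dots> = 0"
    using j hermite_orth by (intro prod_zero) auto
  finally show "(\<integral>x. (\<Prod>j\<in>UNIV. hermite (f j) (x j)) * (\<Prod>j\<in>UNIV. hermite (g j) (x j)) \<partial>PiM UNIV (\<lambda>_. NN)) = 0" .
qed



definition cl :: "'v mgraph \<Rightarrow> (nat \<times> bool) set set \<Rightarrow> nat \<times> bool \<Rightarrow> (nat \<times> bool) set" where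
  "cl es M h = ((gamma_adj es M)\<^sup>*) `` {h}"

definition compat :: "(nat \<Rightarrow> 'n) \<Rightarrow> (nat \<times> bool) set set \<Rightarrow> bool" where
  "compat \<sigma> M = (\<forall>p\<in>M. \<forall>h\<in>p. \<forall>h'\<in>p. \<sigma> (fst h) = \<sigma> (fst h'))"

lemma finite_halfedges [simp]: "finite (halfedges es)"
  by (simp add: halfedges_def)

lemma card_halfedges: "card (halfedges es) = 2 * length es"
  by (simp add: halfedges_def card_cartesian_product)

lemma gamma_adj_sub: "gamma_adj es M \<subseteq> halfedges es \<times> halfedges es"
  by (auto simp: gamma_adj_def)

lemma gamma_adj_sym: "(h, h') \<in> gamma_adj es M \<Longrightarrow> (h', h) \<in> gamma_adj es M"
  by (auto simp: gamma_adj_def insert_commute)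

lemma rtr_sym: "(h, h') \<in> (gamma_adj es M)\<^sup>* \<Longrightarrow> (h', h) \<in> (gamma_adj es M)\<^sup>*"
proof (induction rule: rtrancl_induct)
  case base then show ?case by simp
next
  case (step y z)
  then show ?case by (meson converse_rtrancl_into_rtrancl gamma_adj_sym)
qed

lemma rtr_H: "(h, h') \<in> (gamma_adj es M)\<^sup>* \<Longrightarrow> h \<in> halfedges es \<Longrightarrow> h' \<in> halfedges es"
  by (induction rule: rtrancl_induct) (auto simp: gamma_adj_def)

lemma cl_self: "h \<in> cl es M h"
  by (simp add: cl_def)

lemma cl_sub: "h \<in> halfedges es \<Longrightarrow> cl es M h \<subseteq> halfedges es"
  using rtr_H by (auto simp: cl_def)

lemma cl_mem: "h' \<in> cl es M h \<longleftrightarrow> (h, h') \<in> (gamma_adj es M)\<^sup>*"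
  by (simp add: cl_def)

lemma cl_eq: "h' \<in> cl es M h \<Longrightarrow> cl es M h' = cl es M h"
  unfolding cl_def by (auto intro: rtrancl_trans dest: rtr_sym)

lemma cl_eq_iff: "cl es M h = cl es M h' \<longleftrightarrow> h' \<in> cl es M h"
  by (metis cl_eq cl_self)

lemma comps_cl: "gamma_comps es M = cl es M ` halfedges es"
  unfolding gamma_comps_def quotient_def cl_def by blast

lemma finite_comps [simp]: "finite (gamma_comps es M)"
  by (simp add: comps_cl)

lemma comp_mem: "C \<in> gamma_comps es M \<Longrightarrow> h \<in> C \<Longrightarrow> C = cl es M h"
  by (auto simp: comps_cl cl_eq)

lemma comp_sub: "C \<in> gamma_comps es M \<Longrightarrow> C \<subseteq> halfedges es"
  by (auto simp: comps_cl dest: cl_sub)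

lemma comp_ne: "C \<in> gamma_comps es M \<Longrightarrow> C \<noteq> {}"
  unfolding comps_cl using cl_self by (metis empty_iff imageE)

lemma adj_edge: "h \<in> halfedges es \<Longrightarrow> (h, (fst h, \<not> snd h)) \<in> gamma_adj es M"
  by (cases h) (auto simp: gamma_adj_def halfedges_def)

lemma cl_fstF: "h \<in> halfedges es \<Longrightarrow> cl es M (fst h, False) = cl es M h"
proof (cases "snd h")
  case True
  assume h: "h \<in> halfedges es"
  then have "(h, (fst h, False)) \<in> gamma_adj es M" using adj_edge[OF h] True by simp
  then have "(fst h, False) \<in> cl es M h" by (auto simp: cl_def)
  then show ?thesis by (rule cl_eq)
next
  case False
  then show ?thesis by (cases h) simp
qed

lemma matching_collsD:
  assumes "M \<in> matching_colls es" "p \<in> M"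
  shows "\<exists>h h'. p = {h,h'} \<and> h \<noteq> h' \<and> h \<in> halfedges es \<and> h' \<in> halfedges es \<and> hv es h = hv es h'"
proof -
  have "\<forall>p\<in>M. \<exists>h h'. p = {h,h'} \<and> h \<noteq> h' \<and> h \<in> halfedges es \<and> h' \<in> halfedges es \<and> hv es h = hv es h'"
    using assms(1) by (simp add: matching_colls_def)
  then show ?thesis using assms(2) by (rule bspec)
qed

lemma matching_collsD2:
  assumes "M \<in> matching_colls es" "p \<in> M" "q \<in> M" "p \<noteq> q"
  shows "p \<inter> q = {}"
proof -
  have "\<forall>p\<in>M. \<forall>q\<in>M. p \<noteq> q \<longrightarrow> p \<inter> q = {}"
    using assms(1) by (simp add: matching_colls_def)
  then show ?thesis using assms(2-4) by blast
qed

lemma matching_sub: "M \<in> matching_colls es \<Longrightarrow> p \<in> M \<Longrightarrow> p \<subseteq> halfedges es"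
  using matching_collsD by fastforce

lemma matching_pair:
  assumes "M \<in> matching_colls es" "p \<in> M" "h \<in> p" "h' \<in> p" "h \<noteq> h'"
  shows "p = {h, h'}" "(h, h') \<in> gamma_adj es M"
proof -
  obtain a b where ab: "p = {a,b}" "a \<noteq> b" "a \<in> halfedges es" "b \<in> halfedges es"
    using matching_collsD[OF assms(1,2)] by blast
  show pe: "p = {h, h'}" using ab assms(3-5) by auto
  show "(h, h') \<in> gamma_adj es M"
    using ab assms pe unfolding gamma_adj_def by auto
qed

lemma matching_cl:
  assumes "M \<in> matching_colls es" "p \<in> M" "h \<in> p" "h' \<in> p"
  shows "cl es M h' = cl es M h"
proof (cases "h = h'")
  case False
  then have "(h, h') \<in> gamma_adj es M" using matching_pair(2)[OF assms False] by simp
  then have "h' \<in> cl es M h" by (auto simp: cl_def)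
  then show ?thesis by (rule cl_eq)
qed simp

lemma compat_rtr:
  assumes "compat \<sigma> M" "(h, h') \<in> (gamma_adj es M)\<^sup>*"
  shows "\<sigma> (fst h) = \<sigma> (fst h')"
  using assms(2)
proof (induction rule: rtrancl_induct)
  case base then show ?case by simp
next
  case (step y z)
  then have "fst y = fst z \<or> {y, z} \<in> M" by (auto simp: gamma_adj_def)
  moreover have "\<sigma> (fst y) = \<sigma> (fst z)" if "{y, z} \<in> M"
  proof -
    have "\<forall>h\<in>{y,z}. \<forall>h'\<in>{y,z}. \<sigma> (fst h) = \<sigma> (fst h')"
      using assms(1) that unfolding compat_def by (rule bspec)
    then show ?thesis by blast
  qed
  ultimately have "\<sigma> (fst y) = \<sigma> (fst z)" by auto
  then show ?case using step by simp
qed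

lemma matched_iff: "matched M h \<longleftrightarrow> h \<in> \<Union>M"
  by (auto simp: matched_def)

lemma comps_split: "gamma_comps es M = cycle_comps es M \<union> path_comps es M"
  "cycle_comps es M \<inter> path_comps es M = {}"
  by (auto simp: cycle_comps_def path_comps_def)

lemma cycle_unmatched: "C \<in> cycle_comps es M \<Longrightarrow> C \<inter> (halfedges es - \<Union>M) = {}"
  by (auto simp: cycle_comps_def matched_iff)

lemma path_unmatched: "C \<in> path_comps es M \<Longrightarrow> C \<inter> (halfedges es - \<Union>M) = path_ends M C"
  by (auto simp: path_comps_def path_ends_def matched_iff dest: comp_sub)

section \<open>Core factorisation over components\<close>

lemma core_sum:
  fixes X :: "'v \<Rightarrow> 'n::finite \<Rightarrow> 'a::comm_ring_1"
  assumes M: "M \<in> matching_colls es"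
  shows "(\<Sum>\<sigma>\<in>{\<sigma>\<in>Pi\<^sub>E {..<length es} (\<lambda>_. UNIV). compat \<sigma> M}.
            \<Prod>h\<in>halfedges es - \<Union>M. X (hv es h) (\<sigma> (fst h)))
       = of_nat CARD('n) ^ card (cycle_comps es M) *
         (\<Prod>C\<in>path_comps es M. \<Sum>i\<in>UNIV. \<Prod>h\<in>path_ends M C. X (hv es h) i)"
proof -
  let ?H = "halfedges es"
  let ?U = "halfedges es - \<Union>M"
  let ?C = "gamma_comps es M"
  let ?cl = "cl es M"
  define ii where "ii \<tau> = (\<lambda>j. if j < length es then \<tau> (?cl (j, False)) else undefined)" for \<tau> :: "(nat \<times> bool) set \<Rightarrow> 'n"
  define jj where "jj \<sigma> = (\<lambda>C. if C \<in> ?C then \<sigma> (fst (SOME h. h \<in> C)) else undefined)" for \<sigma> :: "nat \<Rightarrow> 'n"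
  have some_in: "(SOME h. h \<in> C) \<in> C" if "C \<in> ?C" for C
    using comp_ne[OF that] by (simp add: some_in_eq)
  have step1: "(\<Sum>\<sigma>\<in>{\<sigma>\<in>Pi\<^sub>E {..<length es} (\<lambda>_. UNIV). compat \<sigma> M}.
            \<Prod>h\<in>?U. X (hv es h) (\<sigma> (fst h)))
      = (\<Sum>\<tau>\<in>Pi\<^sub>E ?C (\<lambda>_. UNIV). \<Prod>h\<in>?U. X (hv es h) (\<tau> (?cl h)))"
  proof (rule sum.reindex_bij_witness[where i = ii and j = jj])
    fix \<sigma> :: "nat \<Rightarrow> 'n" assume s: "\<sigma> \<in> {\<sigma>\<in>Pi\<^sub>E {..<length es} (\<lambda>_. UNIV). compat \<sigma> M}"
    show "ii (jj \<sigma>) = \<sigma>"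
    proof
      fix j
      show "ii (jj \<sigma>) j = \<sigma> j"
      proof (cases "j < length es")
        case True
        then have hj: "(j, False) \<in> ?H" by (simp add: halfedges_def)
        then have Cin: "?cl (j, False) \<in> ?C" by (simp add: comps_cl)
        define h0 where "h0 = (SOME h. h \<in> ?cl (j, False))"
        have "h0 \<in> ?cl (j, False)" using some_in[OF Cin] by (simp add: h0_def)
        then have r: "((j, False), h0) \<in> (gamma_adj es M)\<^sup>*" by (simp only: cl_mem)
        have cs: "compat \<sigma> M" using s by simp
        have "\<sigma> (fst (j, False)) = \<sigma> (fst h0)" by (rule compat_rtr[OF cs r])
        then show ?thesis using True Cin by (simp add: ii_def jj_def h0_def)
      next
        case False
        then show ?thesis using s by (simp add: ii_def PiE_def extensional_def)
      qed
    qed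
    show "jj \<sigma> \<in> Pi\<^sub>E ?C (\<lambda>_. UNIV)" by (simp add: jj_def PiE_def extensional_def)
    show "(\<Prod>h\<in>?U. X (hv es h) (jj \<sigma> (?cl h))) = (\<Prod>h\<in>?U. X (hv es h) (\<sigma> (fst h)))"
    proof (rule prod.cong[OF refl])
      fix h assume h: "h \<in> ?U"
      then have Cin: "?cl h \<in> ?C" by (simp add: comps_cl)
      have "(SOME h'. h' \<in> ?cl h) \<in> ?cl h" using some_in[OF Cin] .
      then have "\<sigma> (fst (SOME h'. h' \<in> ?cl h)) = \<sigma> (fst h)"
        using s compat_rtr[of \<sigma> M] rtr_sym by (metis (mono_tags, lifting) cl_mem mem_Collect_eq)
      then show "X (hv es h) (jj \<sigma> (?cl h)) = X (hv es h) (\<sigma> (fst h))"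
        using Cin by (simp add: jj_def)
    qed
  next
    fix \<tau> :: "(nat \<times> bool) set \<Rightarrow> 'n" assume t: "\<tau> \<in> Pi\<^sub>E ?C (\<lambda>_. UNIV)"
    show "jj (ii \<tau>) = \<tau>"
    proof
      fix C
      show "jj (ii \<tau>) C = \<tau> C"
      proof (cases "C \<in> ?C")
        case True
        define h0 where "h0 = (SOME h. h \<in> C)"
        have h0: "h0 \<in> C" using some_in[OF True] by (simp add: h0_def)
        have h0H: "h0 \<in> ?H" using comp_sub[OF True] h0 by blast
        then have "fst h0 < length es" by (simp add: halfedges_def mem_Times_iff)
        moreover have "?cl (fst h0, False) = C"
          using cl_fstF[OF h0H] comp_mem[OF True h0] by simp
        ultimately show ?thesis using True by (simp add: jj_def ii_def h0_def)
      next
        case False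
        then show ?thesis using t by (simp add: jj_def PiE_def extensional_def)
      qed
    qed
    show "ii \<tau> \<in> {\<sigma>\<in>Pi\<^sub>E {..<length es} (\<lambda>_. UNIV). compat \<sigma> M}"
    proof (simp, intro conjI)
      show "ii \<tau> \<in> Pi\<^sub>E {..<length es} (\<lambda>_. UNIV)" by (simp add: ii_def PiE_def extensional_def)
      show "compat (ii \<tau>) M"
        unfolding compat_def
      proof (intro ballI)
        fix p h h' assume ph: "p \<in> M" "h \<in> p" "h' \<in> p"
        have hH: "h \<in> ?H" "h' \<in> ?H" using matching_sub[OF M ph(1)] ph by blast+
        then have "fst h < length es" "fst h' < length es" by (auto simp: halfedges_def mem_Times_iff)
        moreover have "?cl h = ?cl h'" using matching_cl[OF M ph(1) ph(2) ph(3)] by simp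
        ultimately show "ii \<tau> (fst h) = ii \<tau> (fst h')"
          using hH by (simp add: ii_def cl_fstF)
      qed
    qed
  qed
  have step2: "(\<Prod>h\<in>?U. X (hv es h) (\<tau> (?cl h))) = (\<Prod>C\<in>?C. \<Prod>h\<in>C \<inter> ?U. X (hv es h) (\<tau> C))" for \<tau>
  proof -
    have "(\<Prod>h\<in>?U. X (hv es h) (\<tau> (?cl h))) = (\<Prod>C\<in>?C. \<Prod>h\<in>{h. h \<in> ?U \<and> ?cl h = C}. X (hv es h) (\<tau> (?cl h)))"
      by (rule prod.group[symmetric]) (auto simp: comps_cl)
    also have "\<dots> = (\<Prod>C\<in>?C. \<Prod>h\<in>C \<inter> ?U. X (hv es h) (\<tau> C))"
    proof (rule prod.cong[OF refl])
      fix C assume C: "C \<in> ?C"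
      have "{h. h \<in> ?U \<and> ?cl h = C} = C \<inter> ?U"
        using C comp_mem[OF C] cl_self by blast
      then show "(\<Prod>h\<in>{h. h \<in> ?U \<and> ?cl h = C}. X (hv es h) (\<tau> (?cl h))) = (\<Prod>h\<in>C \<inter> ?U. X (hv es h) (\<tau> C))"
        by (auto intro: prod.cong)
    qed
    finally show ?thesis .
  qed
  have step3: "(\<Sum>\<tau>\<in>Pi\<^sub>E ?C (\<lambda>_. UNIV). \<Prod>C\<in>?C. \<Prod>h\<in>C \<inter> ?U. X (hv es h) (\<tau> C))
      = (\<Prod>C\<in>?C. \<Sum>i\<in>UNIV. \<Prod>h\<in>C \<inter> ?U. X (hv es h) i)"
    by (rule prod_sum_PiE[symmetric]) auto
  have step4: "(\<Prod>C\<in>?C. \<Sum>i\<in>UNIV. \<Prod>h\<in>C \<inter> ?U. X (hv es h) i)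
      = (\<Prod>C\<in>cycle_comps es M. \<Sum>i\<in>UNIV. \<Prod>h\<in>C \<inter> ?U. X (hv es h) i) *
        (\<Prod>C\<in>path_comps es M. \<Sum>i\<in>UNIV. \<Prod>h\<in>C \<inter> ?U. X (hv es h) i)"
    by (subst comps_split(1), rule prod.union_disjoint) (auto simp: comps_split(2) cycle_comps_def path_comps_def)
  have step5: "(\<Prod>C\<in>cycle_comps es M. \<Sum>i\<in>UNIV. \<Prod>h\<in>C \<inter> ?U. X (hv es h) i) = of_nat CARD('n) ^ card (cycle_comps es M)"
    by (simp add: cycle_unmatched)
  have step6: "(\<Prod>C\<in>path_comps es M. \<Sum>i\<in>UNIV. \<Prod>h\<in>C \<inter> ?U. X (hv es h) i) =
      (\<Prod>C\<in>path_comps es M. \<Sum>i\<in>UNIV. \<Prod>h\<in>path_ends M C. X (hv es h) i)"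
    by (simp add: path_unmatched)
  show ?thesis
    unfolding step1 step2 step3 step4 step5 step6 ..
qed



definition Sk :: "'v mgraph \<Rightarrow> (nat \<Rightarrow> 'n) \<Rightarrow> 'v \<times> 'n \<Rightarrow> (nat \<times> bool) set" where
  "Sk es \<sigma> k = {h \<in> halfedges es. hv es h = fst k \<and> \<sigma> (fst h) = snd k}"

definition key :: "'v mgraph \<Rightarrow> (nat \<Rightarrow> 'n) \<Rightarrow> nat \<times> bool \<Rightarrow> 'v \<times> 'n" where
  "key es \<sigma> h = (hv es h, \<sigma> (fst h))"

lemma Sk_key: "h \<in> Sk es \<sigma> k \<longleftrightarrow> h \<in> halfedges es \<and> key es \<sigma> h = k"
  by (cases k) (auto simp: Sk_def key_def)

lemma Sk_disj: "k \<noteq> k' \<Longrightarrow> Sk es \<sigma> k \<inter> Sk es \<sigma> k' = {}"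
  by (auto simp: Sk_key)

lemma finite_Sk [simp]: "finite (Sk es \<sigma> k)"
  by (rule finite_subset[of _ "halfedges es"]) (auto simp: Sk_def)

lemma compat_key:
  assumes "M \<in> matching_colls es" "compat \<sigma> M" "p \<in> M" "h \<in> p"
  shows "p \<subseteq> Sk es \<sigma> (key es \<sigma> h)"
proof
  fix h' assume h': "h' \<in> p"
  obtain a b where ab: "p = {a,b}" "a \<noteq> b" "a \<in> halfedges es" "b \<in> halfedges es" "hv es a = hv es b"
    using matching_collsD[OF assms(1,3)] by blast
  have "hv es h' = hv es h" using ab h' assms(4) by auto
  moreover have "\<sigma> (fst h') = \<sigma> (fst h)"
  proof -
    have "\<forall>x\<in>p. \<forall>y\<in>p. \<sigma> (fst x) = \<sigma> (fst y)" using assms(2,3) unfolding compat_def by (rule bspec)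
    then show ?thesis using h' assms(4) by blast
  qed
  moreover have "h' \<in> halfedges es" using ab h' by auto
  ultimately show "h' \<in> Sk es \<sigma> (key es \<sigma> h)" by (simp add: Sk_key key_def)
qed

lemma pair_ne: "M \<in> matching_colls es \<Longrightarrow> p \<in> M \<Longrightarrow> \<exists>h. h \<in> p"
proof -
  assume "M \<in> matching_colls es" "p \<in> M"
  then obtain h h' where "p = {h, h'}" using matching_collsD by blast
  then show ?thesis by blast
qed

lemma hermite_expand:
  fixes X :: "'v::finite \<Rightarrow> 'n::finite \<Rightarrow> 'a::comm_ring_1"
  shows "(\<Prod>u\<in>UNIV. \<Prod>i\<in>UNIV. hermite (cnt es \<sigma> u i) (X u i)) =
     (\<Sum>M\<in>{M\<in>matching_colls es. compat \<sigma> M}. (-1) ^ card M * (\<Prod>h\<in>halfedges es - \<Union>M. X (hv es h) (\<sigma> (fst h))))"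
proof -
  let ?S = "Sk es \<sigma>"
  let ?X = "\<lambda>k. X (fst k) (snd k)"
  let ?MC = "{M\<in>matching_colls es. compat \<sigma> M}"
  let ?T = "Pi\<^sub>E UNIV (\<lambda>k. pmatch (?S k))"
  let ?g = "\<lambda>Nf. \<Prod>k\<in>UNIV. (-1) ^ card (Nf k) * ?X k ^ card (?S k - \<Union>(Nf k))"
  have "(\<Prod>u\<in>UNIV. \<Prod>i\<in>UNIV. hermite (cnt es \<sigma> u i) (X u i)) = (\<Prod>k\<in>UNIV. hermite (card (?S k)) (?X k))"
    by (simp add: prod.cartesian_product cnt_def Sk_def case_prod_beta)
  also have "\<dots> = (\<Prod>k\<in>UNIV. \<Sum>N\<in>pmatch (?S k). (-1) ^ card N * ?X k ^ card (?S k - \<Union>N))"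
    by (simp add: HS_hermite[symmetric] HS_def)
  also have "\<dots> = (\<Sum>Nf\<in>?T. ?g Nf)"
    by (rule prod_sum_PiE) (auto simp: finite_pmatch)
  also have "\<dots> = (\<Sum>M\<in>?MC. (-1) ^ card M * (\<Prod>h\<in>halfedges es - \<Union>M. X (hv es h) (\<sigma> (fst h))))"
  proof (rule sym, rule sum.reindex_bij_witness[where i = "\<lambda>Nf. \<Union>(range Nf)" and j = "\<lambda>M k. {p\<in>M. p \<subseteq> ?S k}"])
    fix M assume M: "M \<in> ?MC"
    then have MM: "M \<in> matching_colls es" "compat \<sigma> M" by auto
    show "\<Union>(range (\<lambda>k. {p\<in>M. p \<subseteq> ?S k})) = M"
    proof (intro equalityI subsetI)
      fix p assume "p \<in> M"
      moreover obtain h where "h \<in> p" using pair_ne[OF MM(1) \<open>p \<in> M\<close>] by blast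
      ultimately show "p \<in> \<Union>(range (\<lambda>k. {p\<in>M. p \<subseteq> ?S k}))"
        using compat_key[OF MM] by blast
    qed auto
    show "(\<lambda>k. {p\<in>M. p \<subseteq> ?S k}) \<in> ?T"
    proof -
      have "{p\<in>M. p \<subseteq> ?S k} \<in> pmatch (?S k)" for k
      proof (rule pmatchI)
        fix p assume p: "p \<in> {p\<in>M. p \<subseteq> ?S k}"
        have pM: "p \<in> M" using p by simp
        obtain a b where ab: "p = {a,b}" "a \<noteq> b" using matching_collsD[OF MM(1) pM] by auto
        have "a \<in> ?S k" "b \<in> ?S k" using p ab by auto
        then show "\<exists>a b. p = {a, b} \<and> a \<noteq> b \<and> a \<in> ?S k \<and> b \<in> ?S k" using ab by (intro exI[of _ a] exI[of _ b]) auto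
      next
        fix p q assume "p \<in> {p\<in>M. p \<subseteq> ?S k}" "q \<in> {p\<in>M. p \<subseteq> ?S k}" "p \<noteq> q"
        then show "p \<inter> q = {}" using matching_collsD2[OF MM(1), of p q] by simp
      qed
      then show ?thesis by (simp add: PiE_UNIV_domain)
    qed
    show "?g (\<lambda>k. {p\<in>M. p \<subseteq> ?S k}) = (-1) ^ card M * (\<Prod>h\<in>halfedges es - \<Union>M. X (hv es h) (\<sigma> (fst h)))"
    proof -
      let ?A = "\<lambda>k. {p\<in>M. p \<subseteq> ?S k}"
      have finM: "finite M"
        using MM(1) unfolding matching_colls_def
        by (metis (no_types, lifting) Pow_iff finite_Pow_iff finite_halfedges finite_subset matching_sub[OF MM(1)] subsetI)
      have dA: "?A k \<inter> ?A k' = {}" if "k \<noteq> k'" for k k'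
      proof (rule ccontr)
        assume "?A k \<inter> ?A k' \<noteq> {}"
        then obtain p where p: "p \<in> M" "p \<subseteq> ?S k" "p \<subseteq> ?S k'" by blast
        then obtain h where "h \<in> p" using pair_ne[OF MM(1)] by blast
        then show False using p Sk_disj[OF that] by blast
      qed
      have cardM: "card M = (\<Sum>k\<in>UNIV. card (?A k))"
      proof -
        have "M = \<Union>(range ?A)"
        proof (intro equalityI subsetI)
          fix p assume "p \<in> M"
          moreover obtain h where "h \<in> p" using pair_ne[OF MM(1) \<open>p \<in> M\<close>] by blast
          ultimately show "p \<in> \<Union>(range ?A)" using compat_key[OF MM] by blast
        qed auto
        also have "card \<dots> = (\<Sum>k\<in>UNIV. card (?A k))"
          by (rule card_UN_disjoint) (use finM dA in auto)
        finally show ?thesis .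
      qed
      have Sdiff: "?S k - \<Union>(?A k) = ?S k - \<Union>M" for k
      proof (intro equalityI subsetI)
        fix h assume h: "h \<in> ?S k - \<Union>(?A k)"
        show "h \<in> ?S k - \<Union>M"
        proof (rule ccontr)
          assume "h \<notin> ?S k - \<Union>M"
          then obtain p where p: "p \<in> M" "h \<in> p" using h by blast
          have "key es \<sigma> h = k" using h by (simp add: Sk_key)
          then have "p \<subseteq> ?S k" using compat_key[OF MM p] by simp
          then show False using h p by blast
        qed
      qed auto
      have "?g ?A = (\<Prod>k\<in>UNIV. (-1) ^ card (?A k)) * (\<Prod>k\<in>UNIV. ?X k ^ card (?S k - \<Union>M))"
        by (simp add: prod.distrib Sdiff)
      also have "(\<Prod>k\<in>UNIV. (-1) ^ card (?A k)) = ((-1::'a) ^ card M)"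
        by (simp add: cardM power_sum)
      also have "(\<Prod>k\<in>UNIV. ?X k ^ card (?S k - \<Union>M)) = (\<Prod>k\<in>UNIV. \<Prod>h\<in>?S k - \<Union>M. X (hv es h) (\<sigma> (fst h)))"
      proof (rule prod.cong[OF refl])
        fix k
        have "(\<Prod>h\<in>?S k - \<Union>M. X (hv es h) (\<sigma> (fst h))) = (\<Prod>h\<in>?S k - \<Union>M. ?X k)"
          by (rule prod.cong[OF refl]) (auto simp: Sk_def)
        then show "?X k ^ card (?S k - \<Union>M) = (\<Prod>h\<in>?S k - \<Union>M. X (hv es h) (\<sigma> (fst h)))" by simp
      qed
      also have "\<dots> = (\<Prod>h\<in>halfedges es - \<Union>M. X (hv es h) (\<sigma> (fst h)))"
      proof -
        have "(\<Prod>k\<in>UNIV. \<Prod>h\<in>{h. h \<in> halfedges es - \<Union>M \<and> key es \<sigma> h = k}. X (hv es h) (\<sigma> (fst h)))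
            = (\<Prod>h\<in>halfedges es - \<Union>M. X (hv es h) (\<sigma> (fst h)))"
          by (rule prod.group) auto
        moreover have "{h. h \<in> halfedges es - \<Union>M \<and> key es \<sigma> h = k} = ?S k - \<Union>M" for k
          by (auto simp: Sk_key)
        ultimately show ?thesis by simp
      qed
      finally show ?thesis .
    qed
  next
    fix Nf assume Nf: "Nf \<in> ?T"
    then have Nfk: "Nf k \<in> pmatch (?S k)" for k unfolding PiE_UNIV_domain by blast
    have ne: "p \<noteq> {}" if "p \<in> Nf k" for p k using pmatchD[OF Nfk that] by blast
    show "(\<lambda>k. {p\<in>\<Union>(range Nf). p \<subseteq> ?S k}) = Nf"
    proof
      fix k
      show "{p\<in>\<Union>(range Nf). p \<subseteq> ?S k} = Nf k"
      proof (intro equalityI subsetI)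
        fix p assume "p \<in> {p\<in>\<Union>(range Nf). p \<subseteq> ?S k}"
        then obtain k' where p: "p \<in> Nf k'" "p \<subseteq> ?S k" by blast
        have "p \<subseteq> ?S k'" using p(1) pmatch_sub[of "?S k'"] Nfk[of k'] by blast
        then have "k = k'" using p Sk_disj ne[OF p(1)] by blast
        then show "p \<in> Nf k" using p by simp
      next
        fix p assume "p \<in> Nf k"
        then show "p \<in> {p\<in>\<Union>(range Nf). p \<subseteq> ?S k}" using pmatch_sub[of "?S k"] Nfk[of k] by blast
      qed
    qed
    show "\<Union>(range Nf) \<in> ?MC"
    proof (simp only: mem_Collect_eq, intro conjI)
      show "\<Union>(range Nf) \<in> matching_colls es"
        unfolding matching_colls_def mem_Collect_eq
      proof (intro conjI ballI impI)
        fix p assume "p \<in> \<Union>(range Nf)"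
        then obtain k where p: "p \<in> Nf k" by blast
        obtain a b where "p = {a, b}" "a \<noteq> b" "a \<in> ?S k" "b \<in> ?S k" using pmatchD[OF Nfk p] by blast
        then show "\<exists>h h'. p = {h, h'} \<and> h \<noteq> h' \<and> h \<in> halfedges es \<and> h' \<in> halfedges es \<and> hv es h = hv es h'"
          by (intro exI[of _ a] exI[of _ b]) (auto simp: Sk_def)
      next
        fix p q assume pq: "p \<in> \<Union>(range Nf)" "q \<in> \<Union>(range Nf)" "p \<noteq> q"
        then obtain k k' where p: "p \<in> Nf k" "q \<in> Nf k'" by blast
        show "p \<inter> q = {}"
        proof (cases "k = k'")
          case True
          then show ?thesis using pmatch_disj[OF Nfk] p pq(3) by blast
        next
          case False
          have "p \<subseteq> ?S k" "q \<subseteq> ?S k'" using p pmatch_sub Nfk by blast+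
          then show ?thesis using Sk_disj[OF False] by blast
        qed
      qed
      show "compat \<sigma> (\<Union>(range Nf))"
        unfolding compat_def
      proof (intro ballI)
        fix p h h' assume "p \<in> \<Union>(range Nf)" "h \<in> p" "h' \<in> p"
        then obtain k where "p \<in> Nf k" "h \<in> p" "h' \<in> p" by blast
        then have "h \<in> ?S k" "h' \<in> ?S k" using pmatch_sub Nfk by blast+
        then show "\<sigma> (fst h) = \<sigma> (fst h')" by (simp add: Sk_def)
      qed
    qed
  qed
  finally show ?thesis .
qed



lemma matching_colls_sub: "matching_colls es \<subseteq> Pow (Pow (halfedges es))"
  using matching_sub by blast

lemma finite_matching_colls [simp]: "finite (matching_colls es)"
  by (rule finite_subset[OF matching_colls_sub]) simp

lemma finite_matching: "M \<in> matching_colls es \<Longrightarrow> finite M"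
  using matching_colls_sub by (metis PowD finite_Pow_iff finite_halfedges finite_subset subsetD)

lemma part_a:
  "pG es = (\<Sum>\<sigma>\<in>Pi\<^sub>E {..<length es} (\<lambda>_. (UNIV :: 'n::finite set)).
              \<Prod>u\<in>UNIV. \<Prod>i\<in>UNIV. hermite (cnt es \<sigma> u i) (Var u i :: ('v::finite,'n) mpoly))"
proof -
  let ?P = "Pi\<^sub>E {..<length es} (\<lambda>_. (UNIV :: 'n set))"
  let ?f = "\<lambda>\<sigma> M. (-1) ^ card M * (\<Prod>h\<in>halfedges es - \<Union>M. Var (hv es h) (\<sigma> (fst h)) :: ('v,'n) mpoly)"
  have fP: "finite ?P" by (simp add: finite_PiE)
  have "pG es = (\<Sum>M\<in>matching_colls es. \<Sum>\<sigma>\<in>{\<sigma>\<in>?P. compat \<sigma> M}. ?f \<sigma> M)"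
    unfolding pG_def
  proof (rule sum.cong[OF refl])
    fix M assume M: "M \<in> matching_colls es"
    have "(\<Sum>\<sigma>\<in>{\<sigma>\<in>?P. compat \<sigma> M}. ?f \<sigma> M) =
        (-1) ^ card M * (\<Sum>\<sigma>\<in>{\<sigma>\<in>?P. compat \<sigma> M}. \<Prod>h\<in>halfedges es - \<Union>M. Var (hv es h) (\<sigma> (fst h)))"
      by (simp add: sum_distrib_left)
    also have "\<dots> = (-1) ^ card M * (of_nat CARD('n) ^ card (cycle_comps es M) * m_route es M)"
      by (simp only: core_sum[OF M] m_route_def)
    finally show "(-1) ^ card M * of_nat CARD('n) ^ card (cycle_comps es M) * m_route es M =
        (\<Sum>\<sigma>\<in>{\<sigma>\<in>?P. compat \<sigma> M}. ?f \<sigma> M)" by (simp add: mult.assoc)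
  qed
  also have "\<dots> = (\<Sum>\<sigma>\<in>?P. \<Sum>M\<in>{M\<in>matching_colls es. compat \<sigma> M}. ?f \<sigma> M)"
    by (rule sum.swap_restrict[where A = ?P and B = "matching_colls es" and g = "\<lambda>\<sigma> M. ?f \<sigma> M" and R = "\<lambda>\<sigma> M. compat \<sigma> M", symmetric])
       (simp_all add: fP)
  also have "\<dots> = (\<Sum>\<sigma>\<in>?P. \<Prod>u\<in>UNIV. \<Prod>i\<in>UNIV. hermite (cnt es \<sigma> u i) (Var u i :: ('v,'n) mpoly))"
    by (simp only: hermite_expand)
  finally show ?thesis .
qed



section \<open>The empty matching\<close>

lemma rtr_empty_fst: "(h, y) \<in> (gamma_adj es {})\<^sup>* \<Longrightarrow> fst y = fst h"
  by (induction rule: rtrancl_induct) (auto simp: gamma_adj_def)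

lemma cl_empty: "h \<in> halfedges es \<Longrightarrow> cl es {} h = {(fst h, False), (fst h, True)}"
proof (intro equalityI subsetI)
  fix y assume h: "h \<in> halfedges es" and y: "y \<in> cl es {} h"
  then have "(h, y) \<in> (gamma_adj es {})\<^sup>*" by (simp only: cl_mem)
  then have "fst y = fst h" by (rule rtr_empty_fst)
  then show "y \<in> {(fst h, False), (fst h, True)}" by (cases y) auto
next
  fix y assume h: "h \<in> halfedges es" and y: "y \<in> {(fst h, False), (fst h, True)}"
  have c1: "h \<in> cl es {} h" by (rule cl_self)
  have c2: "(fst h, \<not> snd h) \<in> cl es {} h"
    using adj_edge[OF h, of "{}"] by (auto simp: cl_mem)
  have E: "{(fst h, False), (fst h, True)} = {h, (fst h, \<not> snd h)}"
  proof -
    obtain a b where hab: "h = (a, b)" by (cases h)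
    show ?thesis unfolding hab by (cases b) (simp_all add: insert_commute)
  qed
  have "y \<in> {h, (fst h, \<not> snd h)}" using y unfolding E .
  then have "y = h \<or> y = (fst h, \<not> snd h)" by simp
  then show "y \<in> cl es {} h" using c1 c2 by (elim disjE) simp_all
qed

lemma empty_in_mc: "{} \<in> matching_colls es"
  by (simp add: matching_colls_def)

lemma comps_empty: "gamma_comps es {} = (\<lambda>j. {(j, False), (j, True)}) ` {..<length es}"
proof -
  have "gamma_comps es {} = (\<lambda>h. {(fst h, False), (fst h, True)}) ` halfedges es"
    by (simp add: comps_cl cl_empty)
  also have "\<dots> = (\<lambda>j. {(j, False), (j, True)}) ` {..<length es}"
    by (force simp: halfedges_def)
  finally show ?thesis .
qed

lemma cycle_comps_empty: "cycle_comps es {} = {}"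
  by (auto simp: cycle_comps_def matched_def dest: comp_ne)

lemma path_comps_empty: "path_comps es {} = gamma_comps es {}"
  by (auto simp: path_comps_def matched_def dest: comp_ne)

lemma m_route_empty: "m_route es {} = (mono_m es :: ('v,'n::finite) mpoly)"
proof -
  have inj: "inj_on (\<lambda>j. {(j, False), (j, True)}) {..<length es}"
    by (rule inj_onI) auto
  have "m_route es {} = (\<Prod>C\<in>gamma_comps es {}. \<Sum>i\<in>UNIV. \<Prod>h\<in>C. Var (hv es h) i :: ('v,'n) mpoly)"
    by (simp add: m_route_def path_comps_empty path_ends_def matched_def)
  also have "\<dots> = (\<Prod>j<length es. \<Sum>i\<in>UNIV. \<Prod>h\<in>{(j, False), (j, True)}. Var (hv es h) i :: ('v,'n) mpoly)"
    unfolding comps_empty by (rule prod.reindex_cong[OF inj refl]) simp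
  also have "\<dots> = mono_m es"
    unfolding mono_m_def ip_def
  proof (rule prod.cong[OF refl])
    fix j
    have "\<And>i. (\<Prod>h\<in>{(j, False), (j, True)}. Var (hv es h) i :: ('v,'n) mpoly) = Var (fst (es ! j)) i * Var (snd (es ! j)) i"
      by (simp add: hv_def)
    then show "(\<Sum>i\<in>UNIV. \<Prod>h\<in>{(j, False), (j, True)}. Var (hv es h) i :: ('v,'n) mpoly) =
        (\<Sum>i\<in>UNIV. Var (fst (es ! j)) i * Var (snd (es ! j)) i)" by simp
  qed
  finally show ?thesis .
qed

section \<open>Degree bounds\<close>

lemma card_Union_M:
  assumes M: "M \<in> matching_colls es"
  shows "card (\<Union>M) = 2 * card M"
proof -
  have "card (\<Union>M) = (\<Sum>p\<in>M. card p)"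
  proof (rule card_Union_disjoint)
    show "pairwise disjnt M" using matching_collsD2[OF M] by (auto simp: pairwise_def disjnt_def)
    show "\<And>p. p \<in> M \<Longrightarrow> finite p" using matching_sub[OF M] by (meson finite_halfedges finite_subset)
  qed
  also have "\<dots> = (\<Sum>p\<in>M. 2)"
  proof (rule sum.cong[OF refl])
    fix p assume "p \<in> M"
    then obtain h h' where "p = {h,h'}" "h \<noteq> h'" using matching_collsD[OF M] by blast
    then show "card p = 2" by simp
  qed
  finally show ?thesis by simp
qed

lemma card_U:
  assumes M: "M \<in> matching_colls es"
  shows "card (halfedges es - \<Union>M) = 2 * length es - 2 * card M"
    and "2 * card M \<le> 2 * length es"
proof -
  have sub: "\<Union>M \<subseteq> halfedges es" using matching_sub[OF M] by blast
  then have "card (\<Union>M) \<le> card (halfedges es)" by (simp add: card_mono)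
  then show "2 * card M \<le> 2 * length es" using card_Union_M[OF M] card_halfedges[of es] by simp
  show "card (halfedges es - \<Union>M) = 2 * length es - 2 * card M"
    using card_Diff_subset[OF finite_subset[OF sub] sub] card_Union_M[OF M] card_halfedges[of es] by simp
qed

lemma degle_m_route:
  assumes M: "M \<in> matching_colls es"
  shows "degle (m_route es M :: ('v,'n::finite) mpoly) (card (halfedges es - \<Union>M))"
proof -
  let ?U = "halfedges es - \<Union>M"
  have "degle (m_route es M :: ('v,'n) mpoly) (\<Sum>C\<in>path_comps es M. card (path_ends M C))"
    unfolding m_route_def
  proof (rule degle_prod)
    show "finite (path_comps es M)" by (simp add: path_comps_def)
  next
    fix C assume C: "C \<in> path_comps es M"
    have "path_ends M C \<subseteq> halfedges es" using C comp_sub unfolding path_comps_def path_ends_def by blast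
    then have fe: "finite (path_ends M C)" by (rule finite_subset) simp
    show "degle (\<Sum>i\<in>UNIV. \<Prod>h\<in>path_ends M C. Var (hv es h) i :: ('v,'n) mpoly) (card (path_ends M C))"
    proof (rule degle_sum)
      fix i
      have "degle (\<Prod>h\<in>path_ends M C. Var (hv es h) i :: ('v,'n) mpoly) (\<Sum>h\<in>path_ends M C. 1)"
        by (rule degle_prod[OF fe]) (rule degle_Var)
      then show "degle (\<Prod>h\<in>path_ends M C. Var (hv es h) i :: ('v,'n) mpoly) (card (path_ends M C))" by simp
    qed
  qed
  moreover have "(\<Sum>C\<in>path_comps es M. card (path_ends M C)) \<le> card ?U"
  proof -
    have "(\<Sum>C\<in>path_comps es M. card (path_ends M C)) = (\<Sum>C\<in>path_comps es M. card (C \<inter> ?U))"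
      by (simp add: path_unmatched)
    also have "\<dots> = card (\<Union>C\<in>path_comps es M. C \<inter> ?U)"
    proof (rule card_UN_disjoint[symmetric])
      show "finite (path_comps es M)" by (simp add: path_comps_def)
      show "\<forall>C\<in>path_comps es M. finite (C \<inter> ?U)" by simp
      show "\<forall>C\<in>path_comps es M. \<forall>C'\<in>path_comps es M. C \<noteq> C' \<longrightarrow> C \<inter> ?U \<inter> (C' \<inter> ?U) = {}"
      proof (intro ballI impI)
        fix C C' assume CC: "C \<in> path_comps es M" "C' \<in> path_comps es M" "C \<noteq> C'"
        show "C \<inter> ?U \<inter> (C' \<inter> ?U) = {}"
        proof (rule ccontr)
          assume "C \<inter> ?U \<inter> (C' \<inter> ?U) \<noteq> {}"
          then obtain h where "h \<in> C" "h \<in> C'" by blast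
          then have "C = cl es M h" "C' = cl es M h" using CC comp_mem unfolding path_comps_def by blast+
          then show False using CC(3) by simp
        qed
      qed
    qed
    also have "\<dots> \<le> card ?U" by (rule card_mono) auto
    finally show ?thesis .
  qed
  ultimately show ?thesis by (rule degle_mono)
qed

lemma pG_split:
  "pG es = (mono_m es :: ('v,'n::finite) mpoly) +
     (\<Sum>M\<in>matching_colls es - {{}}. (-1) ^ card M * of_nat CARD('n) ^ card (cycle_comps es M) * m_route es M)"
proof -
  have "pG es = (\<Sum>M\<in>insert {} (matching_colls es - {{}}). (-1) ^ card M * of_nat CARD('n) ^ card (cycle_comps es M) * (m_route es M :: ('v,'n) mpoly))"
  proof -
    have "insert {} (matching_colls es - {{}}) = matching_colls es" using empty_in_mc by blast
    then show ?thesis unfolding pG_def by simp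
  qed
  also have "\<dots> = mono_m es + (\<Sum>M\<in>matching_colls es - {{}}. (-1) ^ card M * of_nat CARD('n) ^ card (cycle_comps es M) * m_route es M)"
    by (subst sum.insert) (simp_all add: cycle_comps_empty m_route_empty)
  finally show ?thesis .
qed

lemma rest_deg:
  "\<forall>m\<in>Poly_Mapping.keys (pG es - mono_m es :: ('v,'n::finite) mpoly). mdeg m < 2 * length es"
proof -
  let ?R = "(\<Sum>M\<in>matching_colls es - {{}}. (-1) ^ card M * of_nat CARD('n) ^ card (cycle_comps es M) * (m_route es M :: ('v,'n) mpoly))"
  have eq: "pG es - mono_m es = ?R" by (simp add: pG_split)
  show ?thesis
  proof (cases "length es = 0")
    case True
    have "matching_colls es - {{}} = {}"
    proof -
      have "M = {}" if "M \<in> matching_colls es" for M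
        using card_U(2)[OF that] True finite_matching[OF that] by simp
      then show ?thesis by blast
    qed
    then show ?thesis unfolding eq by (simp only: sum.empty keys_zero) simp
  next
    case False
    have "degle ?R (2 * length es - 1)"
    proof (rule degle_sum)
      fix M assume M: "M \<in> matching_colls es - {{}}"
      then have M1: "M \<in> matching_colls es" "M \<noteq> {}" by auto
      then have "card M \<ge> 1" using finite_matching[OF M1(1)] by (simp add: Suc_le_eq card_gt_0_iff)
      then have le: "card (halfedges es - \<Union>M) \<le> 2 * length es - 1"
        using card_U[OF M1(1)] by simp
      have "degle ((-1) ^ card M * of_nat CARD('n) ^ card (cycle_comps es M) * (m_route es M :: ('v,'n) mpoly))
          (0 + card (halfedges es - \<Union>M))"
        by (rule degle_mult[OF degle_power_const degle_m_route[OF M1(1)]])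
      then show "degle ((-1) ^ card M * of_nat CARD('n) ^ card (cycle_comps es M) * (m_route es M :: ('v,'n) mpoly))
          (2 * length es - 1)" using le degle_mono by fastforce
    qed
    then have D: "\<forall>m\<in>Poly_Mapping.keys ?R. mdeg m \<le> 2 * length es - 1" unfolding degle_def .
    show ?thesis unfolding eq
    proof
      fix m assume "m \<in> Poly_Mapping.keys ?R"
      then have "mdeg m \<le> 2 * length es - 1" using D by blast
      then show "mdeg m < 2 * length es" using False by linarith
    qed
  qed
qed

lemma homog_mono_m: "homog (mono_m es :: ('v,'n::finite) mpoly) (2 * length es)"
proof -
  have "homog (mono_m es :: ('v,'n) mpoly) (\<Sum>j<length es. 2)"
    unfolding mono_m_def
  proof (rule homog_prod)
    fix j
    show "homog (ip (fst (es ! j)) (snd (es ! j)) :: ('v,'n) mpoly) 2"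
      unfolding ip_def
    proof (rule homog_sum)
      fix i
      have "homog (Var (fst (es ! j)) i * Var (snd (es ! j)) i :: ('v,'n) mpoly) (1 + 1)"
        by (rule homog_mult[OF homog_Var homog_Var])
      then show "homog (Var (fst (es ! j)) i * Var (snd (es ! j)) i :: ('v,'n) mpoly) 2"
        by (simp only: one_add_one)
    qed
  qed simp
  then show ?thesis by (simp add: mult.commute)
qed

lemma mono_m_nonzero: "(mono_m es :: ('v,'n::finite) mpoly) \<noteq> 0"
proof
  assume z: "(mono_m es :: ('v,'n) mpoly) = 0"
  define d :: "'v \<Rightarrow> real^'n" where "d = (\<lambda>u. \<chi> i. 1)"
  have "eval_mp (mono_m es :: ('v,'n) mpoly) d = (\<Prod>j<length es. of_nat CARD('n))"
    by (simp add: mono_m_def eval_prod ip_def eval_sum eval_mult d_def)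
  also have "\<dots> \<noteq> 0" by simp
  finally show False using z by simp
qed

lemma tdeg_pG: "tdeg (pG es :: ('v,'n::finite) mpoly) = 2 * length es"
proof -
  let ?m = "mono_m es :: ('v,'n) mpoly"
  let ?p = "pG es :: ('v,'n) mpoly"
  obtain m0 where m0: "m0 \<in> Poly_Mapping.keys ?m" using mono_m_nonzero[of es]
    by (metis keys_eq_empty ex_in_conv)
  have dm0: "mdeg m0 = 2 * length es" using homog_mono_m[of es] m0 unfolding homog_def by blast
  have "m0 \<notin> Poly_Mapping.keys (?p - ?m)" using rest_deg[of es] dm0 by auto
  then have "Poly_Mapping.lookup (?p - ?m) m0 = 0" by (simp add: in_keys_iff)
  then have "Poly_Mapping.lookup ?p m0 = Poly_Mapping.lookup ?m m0" by (simp add: lookup_minus)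
  then have m0p: "m0 \<in> Poly_Mapping.keys ?p" using m0 by (simp add: in_keys_iff)
  have le: "mdeg m \<le> 2 * length es" if "m \<in> Poly_Mapping.keys ?p" for m
  proof -
    have "?p = ?m + (?p - ?m)" by simp
    then have "m \<in> Poly_Mapping.keys ?m \<union> Poly_Mapping.keys (?p - ?m)"
      using keys_add[of ?m "?p - ?m"] that by auto
    then show ?thesis using homog_mono_m[of es] rest_deg[of es] by (auto simp: homog_def)
  qed
  show ?thesis unfolding tdeg_def
  proof (rule Max_eqI)
    show "finite (insert 0 (mdeg ` Poly_Mapping.keys ?p))" by simp
    show "y \<le> 2 * length es" if "y \<in> insert 0 (mdeg ` Poly_Mapping.keys ?p)" for y
      using that le by auto
    have "mdeg m0 \<in> mdeg ` Poly_Mapping.keys ?p" using m0p by (rule imageI)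
    then show "2 * length es \<in> insert 0 (mdeg ` Poly_Mapping.keys ?p)" using dm0 by simp
  qed
qed



section \<open>Involutions on half-edges\<close>

definition eflip :: "nat \<times> bool \<Rightarrow> nat \<times> bool" where
  "eflip h = (fst h, \<not> snd h)"

definition mt :: "(nat \<times> bool) set set \<Rightarrow> nat \<times> bool \<Rightarrow> nat \<times> bool" where
  "mt M h = (if matched M h then (THE h'. h' \<noteq> h \<and> {h, h'} \<in> M) else h)"

lemma eflip_invol [simp]: "eflip (eflip h) = h"
  by (simp add: eflip_def)

lemma eflip_ne: "eflip h \<noteq> h"
  by (cases h) (simp add: eflip_def)

lemma eflip_H: "h \<in> halfedges es \<Longrightarrow> eflip h \<in> halfedges es"
  by (auto simp: eflip_def halfedges_def mem_Times_iff)

context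
  fixes es :: "'v mgraph" and M
  assumes M: "M \<in> matching_colls es"
begin

lemma partner_unique:
  assumes "{h, a} \<in> M" "{h, b} \<in> M" "a \<noteq> h" "b \<noteq> h"
  shows "a = b"
proof (rule ccontr)
  assume "a \<noteq> b"
  then have "{h, a} \<noteq> {h, b}" using assms by (metis doubleton_eq_iff)
  then have "{h, a} \<inter> {h, b} = {}" using matching_collsD2[OF M assms(1,2)] by blast
  then show False by blast
qed

lemma mt_prop:
  assumes "matched M h"
  shows "mt M h \<noteq> h" "{h, mt M h} \<in> M"
proof -
  obtain p where p: "p \<in> M" "h \<in> p" using assms by (auto simp: matched_def)
  obtain a b where ab: "p = {a,b}" "a \<noteq> b" using matching_collsD[OF M p(1)] by blast
  obtain h' where h': "p = {h, h'}" "h' \<noteq> h" using ab p(2) by (metis insert_commute insert_iff singletonD)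
  have ex: "h' \<noteq> h \<and> {h, h'} \<in> M" using h' p(1) by simp
  have "(THE x. x \<noteq> h \<and> {h, x} \<in> M) = h'"
    by (rule the_equality) (use ex partner_unique in blast)+
  then have "mt M h = h'" using assms by (simp add: mt_def)
  then show "mt M h \<noteq> h" "{h, mt M h} \<in> M" using ex by simp_all
qed

lemma mt_unmatched: "\<not> matched M h \<Longrightarrow> mt M h = h"
  by (simp add: mt_def)

lemma mt_fix_iff: "mt M h = h \<longleftrightarrow> \<not> matched M h"
  using mt_prop(1) mt_unmatched by blast

lemma mt_H: "h \<in> halfedges es \<Longrightarrow> mt M h \<in> halfedges es"
proof (cases "matched M h")
  case True
  then have "{h, mt M h} \<in> M" by (rule mt_prop)
  then show ?thesis using matching_sub[OF M] by blast
qed (simp add: mt_unmatched)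

lemma mt_invol: "mt M (mt M h) = h"
proof (cases "matched M h")
  case True
  have p: "{h, mt M h} \<in> M" "mt M h \<noteq> h" using mt_prop[OF True] by auto
  then have mm: "matched M (mt M h)" by (auto simp: matched_def)
  have "{mt M h, mt M (mt M h)} \<in> M" "mt M (mt M h) \<noteq> mt M h" using mt_prop[OF mm] by auto
  moreover have "{mt M h, h} \<in> M" using p(1) by (simp add: insert_commute)
  ultimately show ?thesis using partner_unique p(2) by metis
qed (simp add: mt_unmatched)

lemma adj_iff:
  "(h, h') \<in> gamma_adj es M \<longleftrightarrow> h \<in> halfedges es \<and> (h' = eflip h \<or> (matched M h \<and> h' = mt M h))"
proof
  assume a: "(h, h') \<in> gamma_adj es M"
  then have hh: "h \<in> halfedges es" "h' \<in> halfedges es" "h \<noteq> h'" "fst h = fst h' \<or> {h, h'} \<in> M"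
    by (auto simp: gamma_adj_def)
  show "h \<in> halfedges es \<and> (h' = eflip h \<or> (matched M h \<and> h' = mt M h))"
  proof (cases "fst h = fst h'")
    case True
    then have "h' = eflip h" using hh(3) by (cases h; cases h') (auto simp: eflip_def)
    then show ?thesis using hh by simp
  next
    case False
    then have p: "{h, h'} \<in> M" using hh by simp
    then have m: "matched M h" by (auto simp: matched_def)
    then have "h' = mt M h" using partner_unique[OF p mt_prop(2)[OF m]] hh(3) mt_prop(1)[OF m] by metis
    then show ?thesis using hh m by simp
  qed
next
  assume a: "h \<in> halfedges es \<and> (h' = eflip h \<or> (matched M h \<and> h' = mt M h))"
  then show "(h, h') \<in> gamma_adj es M"
  proof (elim conjE disjE)
    assume h: "h \<in> halfedges es" "h' = eflip h"
    have eH: "eflip h \<in> halfedges es" by (rule eflip_H[OF h(1)])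
    have "eflip h \<noteq> h" by (rule eflip_ne)
    moreover have "fst h = fst (eflip h)" by (simp add: eflip_def)
    ultimately show ?thesis using h eH by (auto simp: gamma_adj_def)
  next
    assume h: "h \<in> halfedges es" "matched M h" "h' = mt M h"
    then show ?thesis using mt_prop[OF h(2)] mt_H[OF h(1)] by (auto simp: gamma_adj_def)
  qed
qed

definition rr where "rr = mt M \<circ> eflip"
definition ss where "ss = eflip \<circ> mt M"

lemma rr_H: "h \<in> halfedges es \<Longrightarrow> rr h \<in> halfedges es"
  by (simp add: rr_def eflip_H mt_H)

lemma ss_rr [simp]: "ss (rr h) = h"
  by (simp add: rr_def ss_def mt_invol)

lemma rr_ss [simp]: "rr (ss h) = h"
  by (simp add: rr_def ss_def mt_invol)

lemma rrn_H: "h \<in> halfedges es \<Longrightarrow> (rr ^^ k) h \<in> halfedges es"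
  by (induction k) (simp_all add: rr_H)

lemma ssn_rrn: "(ss ^^ k) ((rr ^^ k) h) = h"
proof (induction k arbitrary: h)
  case (Suc k)
  have "(ss ^^ Suc k) ((rr ^^ Suc k) h) = (ss ^^ k) (ss ((rr ^^ Suc k) h))"
    by (simp add: funpow_Suc_right del: funpow.simps)
  also have "(rr ^^ Suc k) h = rr ((rr ^^ k) h)" by simp
  finally show ?case using Suc by simp
qed simp

lemma rrn_ssn: "(rr ^^ k) ((ss ^^ k) h) = h"
proof (induction k arbitrary: h)
  case (Suc k)
  have "(rr ^^ Suc k) ((ss ^^ Suc k) h) = (rr ^^ k) (rr ((ss ^^ Suc k) h))"
    by (simp add: funpow_Suc_right del: funpow.simps)
  also have "(ss ^^ Suc k) h = ss ((ss ^^ k) h)" by simp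
  finally show ?case using Suc by simp
qed simp

lemma e_rrn: "eflip ((rr ^^ k) x) = (ss ^^ k) (eflip x)"
proof (induction k arbitrary: x)
  case (Suc k)
  have "eflip ((rr ^^ Suc k) x) = eflip ((rr ^^ k) (rr x))"
    by (simp add: funpow_Suc_right del: funpow.simps)
  also have "\<dots> = (ss ^^ k) (eflip (rr x))" by (rule Suc)
  also have "eflip (rr x) = ss (eflip x)" by (simp add: rr_def ss_def)
  finally show ?case by (simp add: funpow_Suc_right del: funpow.simps)
qed simp

lemma rrn_inj: "(rr ^^ k) a = (rr ^^ k) b \<Longrightarrow> a = b"
  by (metis ssn_rrn)

section \<open>Orbit of an unmatched half-edge\<close>

context
  fixes h0 assumes h0H: "h0 \<in> halfedges es" and h0u: "\<not> matched M h0"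
begin

lemma mt_h0: "mt M h0 = h0" using h0u by (simp add: mt_unmatched)

lemma e_orbit: "eflip ((rr ^^ k) h0) = (ss ^^ Suc k) h0"
proof -
  have "eflip h0 = ss h0" using mt_h0 by (simp add: ss_def)
  then show ?thesis by (simp add: e_rrn funpow_Suc_right del: funpow.simps)
qed

lemma mt_orbit: "mt M ((rr ^^ k) h0) = (ss ^^ k) h0"
proof (cases k)
  case 0
  then show ?thesis by (simp add: mt_h0)
next
  case (Suc j)
  have "mt M ((rr ^^ Suc j) h0) = mt M (mt M (eflip ((rr ^^ j) h0)))" by (simp add: rr_def)
  also have "\<dots> = eflip ((rr ^^ j) h0)" by (simp add: mt_invol)
  finally show ?thesis using Suc e_orbit by simp
qed

lemma period_exists: "\<exists>p>0. (rr ^^ p) h0 = h0"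
proof -
  let ?f = "\<lambda>k. (rr ^^ k) h0"
  have "?f ` {0..card (halfedges es)} \<subseteq> halfedges es" using rrn_H[OF h0H] by auto
  then have "card (?f ` {0..card (halfedges es)}) \<le> card (halfedges es)" by (simp add: card_mono)
  then have "\<not> inj_on ?f {0..card (halfedges es)}" using card_image by fastforce
  then obtain i j where ij: "i \<noteq> j" "?f i = ?f j" unfolding inj_on_def by blast
  have *: "(rr ^^ (b - a)) h0 = h0" if "a < b" "?f a = ?f b" for a b
  proof -
    have "(rr ^^ a) ((rr ^^ (b - a)) h0) = (rr ^^ a) h0"
      using that by (simp add: funpow_add[symmetric, THEN fun_cong, simplified comp_def] )
    then show ?thesis by (rule rrn_inj)
  qed
  show ?thesis
  proof (cases "i < j")
    case True then show ?thesis using *[of i j] ij by (intro exI[of _ "j - i"]) auto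
  next
    case False then have "j < i" using ij by simp
    then show ?thesis using *[of j i] ij by (intro exI[of _ "i - j"]) auto
  qed
qed

definition per where "per = (LEAST p. p > 0 \<and> (rr ^^ p) h0 = h0)"

lemma per: "per > 0" "(rr ^^ per) h0 = h0"
  using LeastI_ex[OF period_exists] by (simp_all add: per_def)

lemma per_min: "0 < q \<Longrightarrow> q < per \<Longrightarrow> (rr ^^ q) h0 \<noteq> h0"
  using not_less_Least[of q "\<lambda>p. p > 0 \<and> (rr ^^ p) h0 = h0"] by (auto simp: per_def)

lemma rr_mod: "(rr ^^ k) h0 = (rr ^^ (k mod per)) h0"
  using funpow_mod_eq[where f = rr and n = per and x = h0 and m = k] per(2) by simp

lemma per_dvd: "(rr ^^ k) h0 = h0 \<Longrightarrow> per dvd k"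
proof -
  assume "(rr ^^ k) h0 = h0"
  then have "(rr ^^ (k mod per)) h0 = h0" using rr_mod by simp
  moreover have "k mod per < per" using per(1) by simp
  ultimately have "k mod per = 0" using per_min by (metis gr0I)
  then show ?thesis by (simp add: dvd_eq_mod_eq_0)
qed

lemma rr_mult_per: "(rr ^^ (m * per)) h0 = h0"
  by (induction m) (simp_all add: funpow_add per(2))

lemma ss_as_rr: "(ss ^^ k) h0 = (rr ^^ (k * (per - 1))) h0"
proof -
  have "(rr ^^ k) ((rr ^^ (k * (per - 1))) h0) = (rr ^^ (k * per)) h0"
  proof -
    have "k + k * (per - 1) = k * per" using per(1) by (cases per) (simp_all add: algebra_simps)
    then show ?thesis by (metis comp_apply funpow_add)
  qed
  also have "\<dots> = h0" using rr_mult_per by (simp add: mult.commute)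
  finally have "(rr ^^ k) ((rr ^^ (k * (per - 1))) h0) = (rr ^^ k) ((ss ^^ k) h0)" by (simp add: rrn_ssn)
  then show ?thesis by (metis rrn_inj)
qed

definition orb where "orb = {(rr ^^ k) h0 | k. True}"

lemma orb_e: "x \<in> orb \<Longrightarrow> eflip x \<in> orb"
proof -
  assume "x \<in> orb"
  then obtain k where x: "x = (rr ^^ k) h0" unfolding orb_def by blast
  have "eflip x = (rr ^^ (Suc k * (per - 1))) h0" unfolding x by (simp only: e_orbit ss_as_rr)
  then show ?thesis unfolding orb_def by blast
qed

lemma orb_mt: "x \<in> orb \<Longrightarrow> mt M x \<in> orb"
proof -
  assume "x \<in> orb"
  then obtain k where x: "x = (rr ^^ k) h0" unfolding orb_def by blast
  have "mt M x = (rr ^^ (k * (per - 1))) h0" unfolding x by (simp only: mt_orbit ss_as_rr)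
  then show ?thesis unfolding orb_def by blast
qed

lemma cl_orb: "cl es M h0 = orb"
proof (intro equalityI subsetI)
  fix y assume "y \<in> cl es M h0"
  then have "(h0, y) \<in> (gamma_adj es M)\<^sup>*" by (simp add: cl_mem)
  then show "y \<in> orb"
  proof (induction rule: rtrancl_induct)
    case base
    then show ?case unfolding orb_def by (auto intro: exI[of _ 0])
  next
    case (step y z)
    have "z = eflip y \<or> z = mt M y" using adj_iff[of y z] step.hyps(2) by blast
    then show ?case using orb_e[OF step.IH] orb_mt[OF step.IH] by blast
  qed
next
  fix y assume "y \<in> orb"
  then obtain k where y: "y = (rr ^^ k) h0" unfolding orb_def by blast
  have "(h0, (rr ^^ k) h0) \<in> (gamma_adj es M)\<^sup>*"
  proof (induction k)
    case 0 then show ?case by simp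
  next
    case (Suc k)
    let ?x = "(rr ^^ k) h0"
    have xH: "?x \<in> halfedges es" by (rule rrn_H[OF h0H])
    have 1: "(?x, eflip ?x) \<in> gamma_adj es M" using xH by (simp add: adj_iff)
    have 2: "(eflip ?x, mt M (eflip ?x)) \<in> (gamma_adj es M)\<^sup>*"
    proof (cases "matched M (eflip ?x)")
      case True
      then show ?thesis using eflip_H[OF xH] by (simp add: adj_iff r_into_rtrancl)
    next
      case False
      then show ?thesis by (simp add: mt_unmatched)
    qed
    have "(rr ^^ Suc k) h0 = mt M (eflip ?x)" by (simp add: rr_def)
    then show ?case using Suc 1 2 by (metis rtrancl_into_rtrancl rtrancl_trans)
  qed
  then show "y \<in> cl es M h0" using y by (simp add: cl_mem)
qed

lemma per_even: "even per"
proof (rule ccontr)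
  assume "\<not> even per"
  then obtain k where k: "per = 2 * k + 1" by (metis oddE)
  have "eflip ((rr ^^ k) h0) \<noteq> (rr ^^ k) h0" by (rule eflip_ne)
  then have "(ss ^^ Suc k) h0 \<noteq> (rr ^^ k) h0" by (metis e_orbit)
  then have "(rr ^^ Suc k) ((ss ^^ Suc k) h0) \<noteq> (rr ^^ Suc k) ((rr ^^ k) h0)" by (metis ssn_rrn)
  moreover have A: "(rr ^^ Suc k) ((ss ^^ Suc k) h0) = h0" by (rule rrn_ssn)
  moreover have B: "(rr ^^ Suc k) ((rr ^^ k) h0) = (rr ^^ (Suc k + k)) h0" by (simp only: funpow_add comp_apply)
  ultimately have C: "h0 \<noteq> (rr ^^ (Suc k + k)) h0" by metis
  have "Suc k + k = per" using k by simp
  then show False using C per(2) by metis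
qed

lemma unmatched_orb:
  assumes "x \<in> orb" "\<not> matched M x"
  shows "x = h0 \<or> x = (rr ^^ (per div 2)) h0"
proof -
  obtain k where x: "x = (rr ^^ k) h0" using assms(1) unfolding orb_def by blast
  have "mt M x = x" using assms(2) by (simp add: mt_unmatched)
  then have "(ss ^^ k) h0 = (rr ^^ k) h0" using x mt_orbit by simp
  then have "(rr ^^ k) ((ss ^^ k) h0) = (rr ^^ k) ((rr ^^ k) h0)" by simp
  then have "h0 = (rr ^^ (k + k)) h0" by (simp add: rrn_ssn funpow_add)
  then have "per dvd 2 * k" using per_dvd by (metis mult_2)
  moreover obtain q where q: "per = 2 * q" using per_even by (metis evenE)
  ultimately have "q dvd k" by simp
  then obtain t where t: "k = q * t" by (metis dvdE)
  have "k mod per = (q * t) mod (q * 2)" unfolding q t by (simp only: mult.commute)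
  also have "\<dots> = q * (t mod 2)" by (rule mult_mod_right[symmetric])
  finally have km: "k mod per = q * (t mod 2)" .
  have "t mod 2 = 0 \<or> t mod 2 = 1" by auto
  then have "k mod per = 0 \<or> k mod per = q" using km by auto
  moreover have "x = (rr ^^ (k mod per)) h0" unfolding x by (rule rr_mod)
  moreover have "per div 2 = q" using q by simp
  ultimately show ?thesis by auto
qed

lemma half_unmatched: "\<not> matched M ((rr ^^ (per div 2)) h0)"
proof -
  obtain q where q: "per = 2 * q" using per_even by (metis evenE)
  have "(rr ^^ q) ((ss ^^ q) h0) = h0" by (rule rrn_ssn)
  moreover have "(rr ^^ q) ((rr ^^ q) h0) = h0" using per(2) q by (simp add: funpow_add[symmetric, THEN fun_cong, simplified] mult_2)
  ultimately have "(ss ^^ q) h0 = (rr ^^ q) h0" by (metis rrn_inj)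
  then have "mt M ((rr ^^ q) h0) = (rr ^^ q) h0" using mt_orbit by simp
  then show ?thesis using q mt_fix_iff by simp
qed

lemma half_ne: "(rr ^^ (per div 2)) h0 \<noteq> h0"
proof -
  obtain q where q: "per = 2 * q" using per_even by (metis evenE)
  then have "0 < q" "q < per" using per(1) by auto
  then show ?thesis using per_min q by simp
qed

lemma card_ends_orb: "card {h \<in> cl es M h0. \<not> matched M h} = 2"
proof -
  have "{h \<in> cl es M h0. \<not> matched M h} = {h0, (rr ^^ (per div 2)) h0}"
  proof (intro equalityI subsetI)
    fix x assume "x \<in> {h \<in> cl es M h0. \<not> matched M h}"
    then show "x \<in> {h0, (rr ^^ (per div 2)) h0}" using unmatched_orb cl_orb by auto
  next
    fix x assume "x \<in> {h0, (rr ^^ (per div 2)) h0}"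
    moreover have "(rr ^^ (per div 2)) h0 \<in> orb" unfolding orb_def by blast
    ultimately show "x \<in> {h \<in> cl es M h0. \<not> matched M h}"
      using h0u half_unmatched cl_orb cl_self[of h0 es M] by auto
  qed
  then show ?thesis using half_ne by simp
qed

end

lemma card_path_ends:
  assumes C: "C \<in> path_comps es M"
  shows "card (path_ends M C) = 2"
proof -
  obtain h0 where h0: "h0 \<in> C" "\<not> matched M h0" using C by (auto simp: path_comps_def)
  have Cc: "C \<in> gamma_comps es M" using C by (simp add: path_comps_def)
  have h0H: "h0 \<in> halfedges es" using comp_sub[OF Cc] h0(1) by blast
  have "C = cl es M h0" using comp_mem[OF Cc h0(1)] .
  then show ?thesis unfolding path_ends_def using card_ends_orb[OF h0H h0(2)] by simp
qed

end

section \<open>Orthogonal invariance\<close>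

lemma card2_obtain: "card A = 2 \<Longrightarrow> \<exists>a b. A = {a, b} \<and> a \<noteq> b"
  by (metis card_2_iff)

lemma eval_m_route_inv:
  fixes T :: "real^'n::finite^'n"
  assumes T: "orthogonal_matrix T" and M: "M \<in> matching_colls es"
  shows "eval_mp (m_route es M :: ('v,'n) mpoly) (\<lambda>u. T *v d u) = eval_mp (m_route es M :: ('v,'n) mpoly) d"
proof -
  have ot: "orthogonal_transformation (\<lambda>x. T *v x)"
    using T by (simp add: orthogonal_transformation_matrix matrix_vector_mul_linear matrix_of_matrix_vector_mul)
  have fin: "finite (path_comps es M)" by (simp add: path_comps_def)
  have "eval_mp (\<Sum>i\<in>UNIV. \<Prod>h\<in>path_ends M C. Var (hv es h) i :: ('v,'n) mpoly) (\<lambda>u. T *v d u) =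
        eval_mp (\<Sum>i\<in>UNIV. \<Prod>h\<in>path_ends M C. Var (hv es h) i :: ('v,'n) mpoly) d"
    if C: "C \<in> path_comps es M" for C
  proof -
    obtain a b where ab: "path_ends M C = {a, b}" "a \<noteq> b"
      using card2_obtain[OF card_path_ends[OF M C]] by blast
    have e: "eval_mp (\<Sum>i\<in>UNIV. \<Prod>h\<in>path_ends M C. Var (hv es h) i :: ('v,'n) mpoly) D = D (hv es a) \<bullet> D (hv es b)"
      for D :: "'v \<Rightarrow> real^'n"
      by (simp add: eval_sum eval_prod eval_mult ab inner_vec_def)
    show ?thesis unfolding e
      using ot by (simp add: orthogonal_transformation_def)
  qed
  then show ?thesis
    unfolding m_route_def by (simp add: eval_prod fin)
qed

lemma eval_pG_inv:
  fixes T :: "real^'n::finite^'n"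
  assumes T: "orthogonal_matrix T"
  shows "eval_mp (pG es :: ('v,'n) mpoly) (\<lambda>u. T *v d u) = eval_mp (pG es :: ('v,'n) mpoly) d"
  unfolding pG_def
  by (simp add: eval_sum eval_mult eval_power eval_uminus eval_m_route_inv[OF T])



lemma sum_cnt: "(\<Sum>k\<in>(UNIV :: ('v::finite \<times> 'n::finite) set). cnt es \<sigma> (fst k) (snd k)) = 2 * length es"
proof -
  have "(\<Sum>k\<in>(UNIV :: ('v \<times> 'n) set). cnt es \<sigma> (fst k) (snd k)) =
      (\<Sum>k\<in>(UNIV :: ('v \<times> 'n) set). \<Sum>h\<in>{h. h \<in> halfedges es \<and> key es \<sigma> h = k}. (1::nat))"
    by (rule sum.cong[OF refl]) (simp add: cnt_def key_def Sk_def prod_eq_iff conj_commute)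
  also have "\<dots> = (\<Sum>h\<in>halfedges es. 1)"
    by (rule sum.group) auto
  also have "\<dots> = 2 * length es" by (simp add: card_halfedges)
  finally show ?thesis .
qed

lemma eval_pG_pt:
  "eval_mp (pG es :: ('v::finite,'n::finite) mpoly) (to_pt x) =
    (\<Sum>\<sigma>\<in>Pi\<^sub>E {..<length es} (\<lambda>_. (UNIV :: 'n set)).
       \<Prod>k\<in>UNIV. hermite (cnt es \<sigma> (fst k) (snd k)) (x k))"
proof -
  have "eval_mp (pG es :: ('v,'n) mpoly) (to_pt x) =
    (\<Sum>\<sigma>\<in>Pi\<^sub>E {..<length es} (\<lambda>_. (UNIV :: 'n set)).
       \<Prod>u\<in>UNIV. \<Prod>i\<in>UNIV. hermite (cnt es \<sigma> u i) (x (u, i)))"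
    by (simp add: part_a eval_sum finite_PiE eval_prod eval_hermite to_pt_def)
  also have "\<dots> = (\<Sum>\<sigma>\<in>Pi\<^sub>E {..<length es} (\<lambda>_. (UNIV :: 'n set)).
       \<Prod>k\<in>UNIV. hermite (cnt es \<sigma> (fst k) (snd k)) (x k))"
    by (simp add: prod.cartesian_product case_prod_beta)
  finally show ?thesis .
qed

lemma part_e:
  fixes G H :: "('v::finite) mgraph"
  assumes "length G \<noteq> length H"
  shows "(\<integral>x. eval_mp (pG G :: ('v,'n::finite) mpoly) (to_pt x) * eval_mp (pG H :: ('v,'n) mpoly) (to_pt x) \<partial>gauss) = 0"
proof -
  let ?PG = "Pi\<^sub>E {..<length G} (\<lambda>_. (UNIV :: 'n set))"
  let ?PH = "Pi\<^sub>E {..<length H} (\<lambda>_. (UNIV :: 'n set))"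
  let ?A = "\<lambda>\<sigma> x. \<Prod>k\<in>(UNIV :: ('v \<times> 'n) set). hermite (cnt G \<sigma> (fst k) (snd k)) (x k) :: real"
  let ?B = "\<lambda>\<tau> x. \<Prod>k\<in>(UNIV :: ('v \<times> 'n) set). hermite (cnt H \<tau> (fst k) (snd k)) (x k) :: real"
  have ne: "(\<Sum>k\<in>(UNIV :: ('v \<times> 'n) set). cnt G \<sigma> (fst k) (snd k)) \<noteq> (\<Sum>k\<in>(UNIV :: ('v \<times> 'n) set). cnt H \<tau> (fst k) (snd k))"
    for \<sigma> \<tau> :: "nat \<Rightarrow> 'n"
    using assms by (simp only: sum_cnt)
  have "(\<lambda>x. eval_mp (pG G :: ('v,'n) mpoly) (to_pt x) * eval_mp (pG H :: ('v,'n) mpoly) (to_pt x)) =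
      (\<lambda>x. \<Sum>\<sigma>\<in>?PG. \<Sum>\<tau>\<in>?PH. ?A \<sigma> x * ?B \<tau> x)"
    by (simp add: eval_pG_pt sum_product)
  then have "(\<integral>x. eval_mp (pG G :: ('v,'n) mpoly) (to_pt x) * eval_mp (pG H :: ('v,'n) mpoly) (to_pt x) \<partial>gauss) =
      (\<integral>x. (\<Sum>\<sigma>\<in>?PG. \<Sum>\<tau>\<in>?PH. ?A \<sigma> x * ?B \<tau> x) \<partial>gauss)" by simp
  also have "\<dots> = (\<Sum>\<sigma>\<in>?PG. \<Sum>\<tau>\<in>?PH. \<integral>x. ?A \<sigma> x * ?B \<tau> x \<partial>gauss)"
    unfolding gauss_def
    using gauss_orth(1)[OF ne]
    by (simp add: Bochner_Integration.integral_sum Bochner_Integration.integrable_sum)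
  also have "\<dots> = 0"
    unfolding gauss_def using gauss_orth(2)[OF ne] by simp
  finally show ?thesis .
qed

theorem mainTheorem3:
  fixes G H :: "('v::finite) mgraph"
    and T :: "real^'n::finite^'n"
  assumes "orthogonal_matrix T"
  shows "pG G = (\<Sum>\<sigma>\<in>Pi\<^sub>E {..<length G} (\<lambda>_. (UNIV :: 'n set)).
              \<Prod>u\<in>UNIV. \<Prod>i\<in>UNIV. hermite (cnt G \<sigma> u i) (Var u i :: ('v,'n) mpoly))
    \<and> (\<forall>d. eval_mp (pG G :: ('v,'n) mpoly) (\<lambda>u. T *v d u) = eval_mp (pG G :: ('v,'n) mpoly) d)
    \<and> tdeg (pG G :: ('v,'n) mpoly) = 2 * length G
    \<and> (\<forall>m\<in>Poly_Mapping.keys (pG G - mono_m G :: ('v,'n) mpoly). mdeg m < 2 * length G)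
    \<and> (length G \<noteq> length H \<longrightarrow>
        (\<integral>x. eval_mp (pG G :: ('v,'n) mpoly) (to_pt x) * eval_mp (pG H :: ('v,'n) mpoly) (to_pt x) \<partial>gauss) = 0)"
  using part_a[of G] eval_pG_inv[OF assms] tdeg_pG[of G] rest_deg[of G] part_e[of G H]
  by blast


end
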